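(* Let $k\ge3$ be an integer, $p$ a prime and $d\ge1$ with $q=p^d>\left(\tfrac12k(k-1)\right)^{k(k-1)}$ and $q\equiv k(k-1)+1\pmod{2k(k-1)}$. Let $H_0$ be the subgroup of order $(q-1)/(k(k-1))$ of ${\rm GF}(q)^\times$ and $G=\{x\mapsto ax+b: a\in H_0,\ b\in{\rm GF}(q)\}$, a nonabelian subgroup of the affine group of ${\rm GF}(q)$ isomorphic to $({\rm GF}(q),+)\rtimes C_{(q-1)/(k(k-1))}$. Then $G$ contains a regular \[\left(\frac{q(q-1)}{k(k-1)},\ \frac{k(q-k)}{k-1},\ \frac{q-1}{k-1}+(k-1)^2-2,\ k^2\right)\text{-PDS}.\]
   Context: A $(v,k',\lambda,\mu)$-PDS in a group $G$ of order $v$ is a $k'$-subset $D$ such that every nonidentity element of $D$ is $xy^{-1}$ ($x,y\in D$) in exactly $\lambda$ ways and every nonidentity element of $G\setminus D$ in exactly $\mu$ ways; regular means $D=D^{(-1)}$ and $1\notin D$. *)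

theory Defs
  imports "HOL-Algebra.Group" "HOL-Number_Theory.Cong"
begin

definition is_pds :: "('g, 'b) monoid_scheme \<Rightarrow> 'g set \<Rightarrow> nat \<Rightarrow> nat \<Rightarrow> nat \<Rightarrow> nat \<Rightarrow> bool" where
  "is_pds G D v k' lam mu \<longleftrightarrow>
     card (carrier G) = v \<and> D \<subseteq> carrier G \<and> card D = k' \<and>
     (\<forall>g \<in> carrier G. g \<noteq> \<one>\<^bsub>G\<^esub> \<longrightarrow>
        card {(x, y). x \<in> D \<and> y \<in> D \<and> x \<otimes>\<^bsub>G\<^esub> inv\<^bsub>G\<^esub> y = g}
          = (if g \<in> D then lam else mu))"

definition is_regular_pds :: "('g, 'b) monoid_scheme \<Rightarrow> 'g set \<Rightarrow> nat \<Rightarrow> nat \<Rightarrow> nat \<Rightarrow> nat \<Rightarrow> bool" where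
  "is_regular_pds G D v k' lam mu \<longleftrightarrow>
     is_pds G D v k' lam mu \<and> (\<lambda>x. inv\<^bsub>G\<^esub> x) ` D = D \<and> \<one>\<^bsub>G\<^esub> \<notin> D"

text \<open>The group {x \<mapsto> a x + b : a \<in> H, b \<in> F} of affine maps of the field F, with
  composition; the pair (a,b) represents x \<mapsto> a x + b, and (a,b)\<cdot>(c,d) is the map
  x \<mapsto> a (c x + d) + b.\<close>
definition affine_group :: "'a::field set \<Rightarrow> ('a \<times> 'a) monoid" where
  "affine_group H = \<lparr> carrier = {(a, b). a \<in> H},
     monoid.mult = (\<lambda>(a, b) (c, d). (a * c, a * d + b)),
     one = (1, 0) \<rparr>"

end

theory Submission
  imports Defs "HOL-Algebra.Multiplicative_Group" "HOL-Library.FuncSet"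
begin

lemma fermat_field:
  fixes u :: "'a::{field,finite}"
  assumes "u \<noteq> 0" shows "u ^ (card (UNIV::'a set) - 1) = 1"
proof -
  let ?S = "UNIV - {0::'a}"
  have "prod (\<lambda>x. u * x) ?S = prod id ?S"
    by (rule prod.reindex_bij_witness[of _ "\<lambda>x. x / u" "\<lambda>x. u*x"]) (auto simp: assms)
  moreover have "prod (\<lambda>x. u * x) ?S = u ^ card ?S * prod id ?S"
    by (simp add: prod.distrib)
  moreover have "card ?S = card (UNIV::'a set) - 1"
    by (simp add: card_Diff_singleton)
  moreover have "prod id ?S \<noteq> 0" by simp
  ultimately show ?thesis by simp
qed

definition ring_of_field :: "'a::field ring"
  where "ring_of_field = \<lparr> carrier = UNIV, monoid.mult = (\<lambda>x y. x * y), one = 1,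
    ring.zero = 0, add = (\<lambda> x y. x + y) \<rparr>"

lemma field_ring_of_field: "field (ring_of_field :: 'a::field ring)"
proof -
  have "\<exists>y. x + y = 0" for x :: 'a
    using add.right_inverse by blast
  moreover have "x \<noteq> 0 \<Longrightarrow> \<exists>y. x * y = 1" for x :: 'a
    by (rule exI[of _ "inverse x"]) auto
  ultimately show ?thesis
    unfolding ring_of_field_def using add.right_inverse
    by unfold_locales (auto simp:algebra_simps Units_def)
qed

lemma pow_ring_of_field: "x [^]\<^bsub>ring_of_field\<^esub> (n::nat) = (x::'a::field) ^ n"
proof -
  interpret field "ring_of_field :: 'a ring" by (rule field_ring_of_field)
  show ?thesis by (induction n) (auto simp: ring_of_field_def)
qed

lemma gen_exists: "\<exists>g::'a::{field,finite}. g \<noteq> 0 \<and> (\<forall>u. u \<noteq> 0 \<longrightarrow> (\<exists>i. u = g ^ i))"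
proof -
  interpret field "ring_of_field :: 'a ring" by (rule field_ring_of_field)
  have "finite (carrier (ring_of_field :: 'a ring))" by simp
  from finite_field_mult_group_has_gen[OF this] obtain a where
    "a \<in> carrier (mult_of (ring_of_field::'a ring))" "carrier (mult_of (ring_of_field::'a ring)) = {a[^]\<^bsub>ring_of_field\<^esub> i | i::nat . i \<in> UNIV}"
    by blast
  then have "\<forall>u. u \<noteq> 0 \<longrightarrow> (\<exists>i. u = a ^ i)"
    unfolding pow_ring_of_field by (auto simp: ring_of_field_def set_eq_iff)
  moreover have "a \<noteq> 0" using \<open>a \<in> carrier (mult_of (ring_of_field::'a ring))\<close>
    by (auto simp: ring_of_field_def)
  ultimately show ?thesis by blast
qed

locale cyc =
  fixes g :: "'a::{field,finite}" and m n0 :: nat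
  assumes g_nz: "g \<noteq> 0" and gen: "\<And>u. u \<noteq> 0 \<Longrightarrow> \<exists>i. u = g^i"
    and N_eq: "card (UNIV::'a set) - 1 = 2*m*n0" and n0_odd: "odd n0" and m_pos: "m > 0"
begin

definition N where "N = card (UNIV::'a set) - 1"

lemma N_pos: "N > 0"
  using N_eq n0_odd m_pos by (auto simp: N_def intro!: Nat.gr0I)

lemma g_pow_N: "g ^ N = 1"
  unfolding N_def by (rule fermat_field[OF g_nz])

lemma order_le: assumes "g ^ n = 1" "n > 0" shows "N \<le> n"
proof -
  have "UNIV - {0} \<subseteq> (\<lambda>i. g ^ i) ` {..<n}"
  proof
    fix u :: 'a assume "u \<in> UNIV - {0}"
    then obtain i where "u = g ^ i" using gen by auto
    also have "g ^ i = g ^ (i mod n)"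
    proof -
      have "g ^ i = g ^ (n * (i div n) + i mod n)" by (simp only: mult_div_mod_eq)
      also have "\<dots> = (g ^ n) ^ (i div n) * g ^ (i mod n)" by (simp only: power_add power_mult)
      finally show ?thesis using assms by simp
    qed
    finally show "u \<in> (\<lambda>i. g ^ i) ` {..<n}" using assms by auto
  qed
  then have "card (UNIV - {0::'a}) \<le> card ((\<lambda>i. g ^ i) ` {..<n})"
    by (intro card_mono) auto
  also have "\<dots> \<le> n" using card_image_le[of "{..<n}"] by auto
  finally show ?thesis by (simp add: N_def card_Diff_singleton)
qed

lemma g_pow_one_iff: "g ^ n = 1 \<longleftrightarrow> N dvd n"
proof
  assume h: "g ^ n = 1"
  have "g ^ n = g ^ (N * (n div N) + n mod N)" by (simp only: mult_div_mod_eq)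
  also have "\<dots> = (g ^ N) ^ (n div N) * g ^ (n mod N)" by (simp only: power_add power_mult)
  finally have "g ^ n = (g ^ N) ^ (n div N) * g ^ (n mod N)" .
  then have "g ^ (n mod N) = 1" using h g_pow_N by simp
  moreover have "n mod N < N" using N_pos by simp
  ultimately have "n mod N = 0" using order_le[of "n mod N"] by (cases "n mod N = 0") auto
  then show "N dvd n" by auto
next
  assume "N dvd n" then obtain t where "n = N * t" by auto
  then show "g ^ n = 1" by (simp add: power_mult g_pow_N)
qed

lemma g_pow_eq_iff: "g ^ a = g ^ b \<longleftrightarrow> [a = b] (mod N)"
proof -
  have *: "g ^ a = g ^ b \<longleftrightarrow> [a = b] (mod N)" if "b \<le> a" for a b
  proof -
    have "g ^ a = g ^ b * g ^ (a - b)" using that by (simp flip: power_add)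
    then have "g ^ a = g ^ b \<longleftrightarrow> g ^ (a - b) = 1" using g_nz by auto
    also have "\<dots> \<longleftrightarrow> N dvd (a - b)" by (rule g_pow_one_iff)
    also have "\<dots> \<longleftrightarrow> [a = b] (mod N)" using that
      by (simp add: cong_altdef_nat)
    finally show ?thesis .
  qed
  show ?thesis
  proof (cases "b \<le> a")
    case True then show ?thesis by (rule *)
  next
    case False
    then have "g ^ b = g ^ a \<longleftrightarrow> [b = a] (mod N)" using * by simp
    then show ?thesis by (metis cong_sym)
  qed
qed

definition ind :: "'a \<Rightarrow> nat" where "ind u = (SOME i. g ^ i = u)"

lemma g_ind: assumes "u \<noteq> 0" shows "g ^ ind u = u"
proof -
  obtain i where "u = g ^ i" using gen assms by blast
  then have "g ^ i = u" by simp
  then show ?thesis unfolding ind_def by (rule someI)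
qed

lemma ind_mult: "u \<noteq> 0 \<Longrightarrow> v \<noteq> 0 \<Longrightarrow> [ind (u*v) = ind u + ind v] (mod N)"
  by (subst g_pow_eq_iff[symmetric]) (simp add: g_ind power_add)

lemma ind_one: "[ind 1 = 0] (mod N)"
  by (subst g_pow_eq_iff[symmetric]) (simp add: g_ind)

lemma ind_g: "[ind g = 1] (mod N)"
  by (subst g_pow_eq_iff[symmetric]) (simp add: g_ind g_nz)

lemma N_eq': "N = 2*m*n0" using N_eq by (simp add: N_def)

lemma minus_one_pow: "g ^ (m*n0) = -1"
proof -
  let ?t = "g ^ (m*n0)"
  have "?t * ?t = g ^ (m*n0 + m*n0)" by (simp add: power_add)
  also have "m*n0 + m*n0 = N" using N_eq' by simp
  finally have "?t * ?t = 1" using g_pow_N by simp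
  then have "(?t - 1) * (?t + 1) = 0" by (simp add: algebra_simps)
  moreover have "?t \<noteq> 1"
  proof
    assume "?t = 1"
    then have "N \<le> m * n0" using order_le[of "m*n0"] m_pos n0_odd by (auto intro!: Nat.gr0I)
    then show False using N_eq' N_pos by simp
  qed
  ultimately show ?thesis by (auto simp: eq_neg_iff_add_eq_0)
qed

lemma ind_minus_one: "[ind (-1) = m*n0] (mod N)"
  by (subst g_pow_eq_iff[symmetric]) (simp add: g_ind minus_one_pow)

lemma m_dvd_N: "m dvd N" using N_eq' by simp

lemma cong_N_m: "[a = b] (mod N) \<Longrightarrow> [a = b] (mod m)"
  using m_dvd_N cong_dvd_modulus_nat by blast

lemma cong_N_2m: "[a = b] (mod N) \<Longrightarrow> [a = b] (mod 2*m)"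
  using N_eq' cong_dvd_modulus_nat by (metis dvd_triv_left)

definition \<omega> :: complex where "\<omega> = cis (2 * pi / m)"

lemma omega_pow: "\<omega> ^ a = cis (2 * pi * a / m)"
proof -
  have eq: "real a * (2 * pi / m) = 2 * pi * a / m" by simp
  show ?thesis unfolding \<omega>_def DeMoivre eq by (rule refl)
qed

lemma omega_pow_eq_1_iff: "\<omega> ^ a = 1 \<longleftrightarrow> m dvd a"
proof
  assume h: "\<omega> ^ a = 1"
  then have "Re (cis (2 * pi * a / m)) = 1" unfolding omega_pow by simp
  then have "cos (2 * pi * a / m) = 1" by simp
  then obtain n :: int where n: "2 * pi * a / m = real_of_int n * 2 * pi"
    using cos_one_2pi_int by blast
  then have "real a = real_of_int n * m" using m_pos by (simp add: field_simps)
  then have "real_of_int (int a) = real_of_int (n * int m)" by simp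
  then have "int a = n * int m" by (simp only: of_int_eq_iff)
  then have "int m dvd int a" by simp
  then show "m dvd a" by simp
next
  assume "m dvd a" then obtain t where "a = m * t" by auto
  then have "2 * pi * a / m = 2 * pi * real t" using m_pos by simp
  then show "\<omega> ^ a = 1" unfolding omega_pow by simp
qed

lemma omega_nz: "\<omega> \<noteq> 0" by (simp add: \<omega>_def)

lemma norm_omega_pow: "norm (\<omega> ^ a) = 1" by (simp add: omega_pow)

lemma omega_pow_eq_iff: "\<omega> ^ a = \<omega> ^ b \<longleftrightarrow> [a = b] (mod m)"
proof -
  have *: "\<omega> ^ a = \<omega> ^ b \<longleftrightarrow> [a = b] (mod m)" if "b \<le> a" for a b
  proof -
    have "\<omega> ^ a = \<omega> ^ b * \<omega> ^ (a - b)" using that by (simp flip: power_add)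
    then have "\<omega> ^ a = \<omega> ^ b \<longleftrightarrow> \<omega> ^ (a - b) = 1" using omega_nz by auto
    also have "\<dots> \<longleftrightarrow> m dvd (a - b)" by (rule omega_pow_eq_1_iff)
    also have "\<dots> \<longleftrightarrow> [a = b] (mod m)" using that
      by (simp add: cong_altdef_nat)
    finally show ?thesis .
  qed
  show ?thesis
  proof (cases "b \<le> a")
    case True then show ?thesis by (rule *)
  next
    case False
    then have "\<omega> ^ b = \<omega> ^ a \<longleftrightarrow> [b = a] (mod m)" using * by simp
    then show ?thesis by (metis cong_sym)
  qed
qed

definition chi :: "nat \<Rightarrow> 'a \<Rightarrow> complex" where
  "chi j u = (if u = 0 then 0 else \<omega> ^ (j * ind u))"

lemma chi_zero[simp]: "chi j 0 = 0" by (simp add: chi_def)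

lemma chi_mult: "chi j (u * v) = chi j u * chi j v"
proof (cases "u = 0 \<or> v = 0")
  case True then show ?thesis by (auto simp: chi_def)
next
  case False
  then have "[ind (u*v) = ind u + ind v] (mod m)" using ind_mult cong_N_m by blast
  then have "[j * ind (u*v) = j * ind u + j * ind v] (mod m)"
    by (metis cong_scalar_left distrib_left)
  then show ?thesis using False by (simp add: chi_def omega_pow_eq_iff[symmetric] power_add)
qed

lemma norm_chi: "norm (chi j u) = (if u = 0 then 0 else 1)"
  by (simp add: chi_def norm_omega_pow)

lemma norm_chi_le: "norm (chi j u) \<le> 1"
  by (simp add: norm_chi)

lemma chi_one[simp]: "chi j 1 = 1"
proof -
  have "[j * ind 1 = j * 0] (mod m)" using ind_one cong_N_m cong_scalar_left by blast
  then show ?thesis by (simp add: chi_def omega_pow_eq_iff[symmetric])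
qed

lemma chi_minus_one: "chi j (-1) = 1"
proof -
  have "[ind (-1) = m * n0] (mod m)" using ind_minus_one cong_N_m by blast
  then have "[ind (-1) = 0] (mod m)" by (simp add: cong_def)
  then have "[j * ind (-1) = j * 0] (mod m)" using cong_scalar_left by blast
  then show ?thesis by (simp add: chi_def omega_pow_eq_iff[symmetric])
qed

lemma chi_neg: "chi j (- u) = chi j u"
  using chi_mult[of j "-1" u] by (simp add: chi_minus_one)

lemma chi_0: "chi 0 u = (if u = 0 then 0 else 1)"
  by (simp add: chi_def)

lemma chi_g: assumes "0 < j" "j < m" shows "chi j g \<noteq> 1"
proof
  assume "chi j g = 1"
  then have "\<omega> ^ (j * ind g) = 1" using g_nz by (simp add: chi_def)
  then have a: "[j * ind g = 0] (mod m)" by (simp add: omega_pow_eq_1_iff cong_0_iff)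
  have b: "[j * ind g = j * 1] (mod m)" using ind_g cong_N_m cong_scalar_left by blast
  have "[j * 1 = 0] (mod m)" using cong_trans[OF cong_sym[OF b] a] .
  then have "[j = 0] (mod m)" by simp
  then show False using assms by (simp add: cong_def)
qed

lemma sum_chi: assumes "0 < j" "j < m" shows "(\<Sum>t\<in>UNIV. chi j t) = 0"
proof -
  have "(\<Sum>t\<in>UNIV. chi j t) = (\<Sum>t\<in>UNIV. chi j (g * t))"
    by (rule sum.reindex_bij_witness[of _ "\<lambda>t. g * t" "\<lambda>t. t / g"]) (auto simp: g_nz)
  also have "\<dots> = chi j g * (\<Sum>t\<in>UNIV. chi j t)"
    by (simp add: chi_mult sum_distrib_left)
  finally have "(1 - chi j g) * (\<Sum>t\<in>UNIV. chi j t) = 0" by (simp add: algebra_simps)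
  then show ?thesis using chi_g[OF assms] by simp
qed

lemma sum_chi_shift: assumes "0 < j" "j < m" shows "(\<Sum>t\<in>UNIV. chi j (t - a)) = 0"
proof -
  have "(\<Sum>t\<in>UNIV. chi j (t - a)) = (\<Sum>t\<in>UNIV. chi j t)"
    by (rule sum.reindex_bij_witness[of _ "\<lambda>t. t + a" "\<lambda>t. t - a"]) auto
  then show ?thesis using sum_chi[OF assms] by simp
qed

lemma chi_cnj_mult: "u \<noteq> 0 \<Longrightarrow> chi j u * cnj (chi j u) = 1"
proof -
  assume "u \<noteq> 0"
  then have "norm (chi j u) = 1" by (simp add: norm_chi)
  have "chi j u * cnj (chi j u) = of_real ((norm (chi j u))^2)" by (rule complex_norm_square[symmetric])
  then show ?thesis using \<open>norm (chi j u) = 1\<close> by simp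
qed

lemma chi_div: assumes "v \<noteq> 0" shows "chi j (u / v) = chi j u * cnj (chi j v)"
proof -
  have "chi j u = chi j (u / v) * chi j v" using assms by (simp flip: chi_mult)
  then have "chi j u * cnj (chi j v) = chi j (u / v) * (chi j v * cnj (chi j v))" by simp
  then show ?thesis using chi_cnj_mult[OF assms] by simp
qed

lemma sum_chi_pair: assumes "0 < j" "j < m" "a \<noteq> b"
  shows "(\<Sum>t\<in>UNIV. chi j (a - t) * cnj (chi j (b - t))) = -1"
proof -
  have "(\<Sum>t\<in>UNIV. chi j (a - t) * cnj (chi j (b - t))) =
        (\<Sum>t\<in>UNIV - {b}. chi j (a - t) * cnj (chi j (b - t)))"
    by (rule sum.mono_neutral_right) auto
  also have "\<dots> = (\<Sum>t\<in>UNIV - {b}. chi j ((a - t) / (b - t)))"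
    by (rule sum.cong) (auto simp: chi_div)
  also have "\<dots> = (\<Sum>s\<in>UNIV - {1}. chi j s)"
  proof (rule sum.reindex_bij_witness[of _ "\<lambda>s. (a - s * b) / (1 - s)" "\<lambda>t. (a - t) / (b - t)"])
    fix t assume t: "t \<in> UNIV - {b}"
    then have "b - t \<noteq> 0" by simp
    then have "1 - (a - t) / (b - t) = (b - a) / (b - t)" by (simp add: field_simps)
    moreover have "a - (a - t) / (b - t) * b = t * (b - a) / (b - t)" using \<open>b - t \<noteq> 0\<close>
      by (simp add: field_simps)
    ultimately show "(a - (a - t) / (b - t) * b) / (1 - (a - t) / (b - t)) = t"
      using assms \<open>b - t \<noteq> 0\<close> by simp
    show "(a - t) / (b - t) \<in> UNIV - {1}" using t assms by auto
  next
    fix s assume s: "s \<in> UNIV - {1::'a}"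
    then have "1 - s \<noteq> 0" by simp
    then have "b - (a - s * b) / (1 - s) = (b - a) / (1 - s)" by (simp add: field_simps)
    moreover have "a - (a - s * b) / (1 - s) = s * (b - a) / (1 - s)" using \<open>1 - s \<noteq> 0\<close>
      by (simp add: field_simps)
    ultimately show "(a - (a - s * b) / (1 - s)) / (b - (a - s * b) / (1 - s)) = s"
      using assms \<open>1 - s \<noteq> 0\<close> by simp
    have "(a - s * b) / (1 - s) \<noteq> b"
    proof
      assume "(a - s * b) / (1 - s) = b"
      then have "a - s * b = b * (1 - s)" using \<open>1 - s \<noteq> 0\<close> by (simp add: field_simps)
      then show False using assms by (simp add: algebra_simps)
    qed
    then show "(a - s * b) / (1 - s) \<in> UNIV - {b}" by simp
  qed simp
  also have "\<dots> = (\<Sum>s\<in>UNIV. chi j s) - chi j 1"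
    by (simp add: sum_diff1)
  finally show ?thesis using sum_chi[OF assms(1,2)] by simp
qed

lemma orth: assumes "u \<noteq> 0"
  shows "(\<Sum>j<m. chi j u * cnj (\<omega> ^ (j * c))) = (if [ind u = c] (mod m) then of_nat m else 0)"
proof -
  define z where "z = \<omega> ^ ind u * cnj (\<omega> ^ c)"
  have e1: "\<omega> ^ (j * x) = (\<omega> ^ x) ^ j" for j x
    by (metis mult.commute power_mult)
  have "chi j u * cnj (\<omega> ^ (j * c)) = z ^ j" for j
    using assms by (simp add: chi_def z_def power_mult_distrib e1)
  then have "(\<Sum>j<m. chi j u * cnj (\<omega> ^ (j * c))) = (\<Sum>j<m. z ^ j)" by simp
  have cc: "cnj (\<omega> ^ c) * \<omega> ^ c = 1"
  proof -
    have "\<omega> ^ c * cnj (\<omega> ^ c) = of_real ((norm (\<omega> ^ c))^2)" by (rule complex_norm_square[symmetric])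
    then show ?thesis by (simp add: norm_omega_pow mult.commute)
  qed
  have z1: "z = 1 \<longleftrightarrow> [ind u = c] (mod m)"
  proof -
    have "z = 1 \<longleftrightarrow> \<omega> ^ ind u = \<omega> ^ c"
    proof
      assume "z = 1"
      then have "z * \<omega> ^ c = \<omega> ^ c" by simp
      moreover have "z * \<omega> ^ c = \<omega> ^ ind u * (cnj (\<omega> ^ c) * \<omega> ^ c)"
        unfolding z_def by (rule mult.assoc)
      ultimately show "\<omega> ^ ind u = \<omega> ^ c" unfolding cc by simp
    next
      assume "\<omega> ^ ind u = \<omega> ^ c" then show "z = 1" using cc by (simp add: z_def mult.commute)
    qed
    then show ?thesis by (simp add: omega_pow_eq_iff)
  qed
  have zm: "z ^ m = 1"
  proof -
    have "z ^ m = \<omega> ^ (m * ind u) * cnj (\<omega> ^ (m * c))"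
      by (simp add: z_def power_mult_distrib e1)
    also have "\<omega> ^ (m * ind u) = 1" by (simp add: omega_pow_eq_1_iff)
    also have "\<omega> ^ (m * c) = 1" by (simp add: omega_pow_eq_1_iff)
    finally show ?thesis by simp
  qed
  show ?thesis
  proof (cases "z = 1")
    case True
    then show ?thesis using \<open>(\<Sum>j<m. chi j u * cnj (\<omega> ^ (j * c))) = (\<Sum>j<m. z ^ j)\<close> z1 by simp
  next
    case False
    then have "(\<Sum>j<m. z ^ j) = 0" using zm by (simp add: sum_gp_strict)
    then show ?thesis using \<open>(\<Sum>j<m. chi j u * cnj (\<omega> ^ (j * c))) = (\<Sum>j<m. z ^ j)\<close> z1 False by simp
  qed
qed

end

lemma sum_PiE_split:
  fixes F :: "(nat \<Rightarrow> 'b) \<Rightarrow> 'c::comm_monoid_add"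
  assumes "finite I" "v \<in> I" "finite A"
  shows "(\<Sum>x\<in>PiE I (\<lambda>_. A). F x) = (\<Sum>x'\<in>PiE (I - {v}) (\<lambda>_. A). \<Sum>t\<in>A. F (x'(v := t)))"
proof -
  have I: "I = insert v (I - {v})" using assms by auto
  have e: "PiE I (\<lambda>_. A) = (\<lambda>(y, g). g(v := y)) ` (A \<times> PiE (I - {v}) (\<lambda>_. A))"
    by (subst I, rule PiE_insert_eq)
  have i: "inj_on (\<lambda>(y, g). g(v := y)) (A \<times> PiE (I - {v}) (\<lambda>_. A))"
    by (rule inj_combinator) simp
  have "(\<Sum>x\<in>PiE I (\<lambda>_. A). F x) = (\<Sum>p\<in>A \<times> PiE (I - {v}) (\<lambda>_. A). F ((\<lambda>(y, g). g(v := y)) p))"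
    unfolding e by (rule sum.reindex[OF i, unfolded comp_def])
  also have "\<dots> = (\<Sum>y\<in>A. \<Sum>g\<in>PiE (I - {v}) (\<lambda>_. A). F (g(v := y)))"
    unfolding sum.cartesian_product by (rule sum.cong) auto
  also have "\<dots> = (\<Sum>g\<in>PiE (I - {v}) (\<lambda>_. A). \<Sum>y\<in>A. F (g(v := y)))"
    by (rule sum.swap)
  finally show ?thesis .
qed

context cyc
begin

definition q :: nat where "q = card (UNIV::'a set)"

lemma q_pos: "q > 0" by (simp add: q_def card_gt_0_iff)

lemma norm_sum_le_card:
  fixes f :: "'a \<Rightarrow> complex"
  assumes "\<And>y. norm (f y) \<le> 1"
  shows "norm (\<Sum>y\<in>(UNIV::'a set). f y) \<le> real q"
proof -
  have "norm (\<Sum>y\<in>(UNIV::'a set). f y) \<le> (\<Sum>y\<in>(UNIV::'a set). norm (f y))" by (rule norm_sum)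
  also have "\<dots> \<le> (\<Sum>y\<in>(UNIV::'a set). 1)" by (rule sum_mono) (rule assms)
  finally show ?thesis by (simp add: q_def)
qed

lemma norm_chi_pair_le: "norm (chi j a * cnj (chi j b)) \<le> 1"
  by (simp add: norm_mult norm_chi mult_le_one)

lemma TB_caseA:
  assumes W: "finite W" "w0 \<in> W" and e0: "\<And>w. w \<in> W \<Longrightarrow> w \<noteq> w0 \<Longrightarrow> e w = 0"
    and ew0: "0 < e w0" "e w0 < m"
  shows "norm (\<Sum>t\<in>UNIV. \<Prod>w\<in>W. chi (e w) (t - x' w)) \<le> real (card W - 1)"
proof -
  define Z where "Z = x' ` (W - {w0})"
  define f where "f t = chi (e w0) (t - x' w0)" for t
  have Zc: "card Z \<le> card W - 1"
    unfolding Z_def using card_image_le[of "W - {w0}" x'] W by (simp add: card_Diff_singleton)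
  have p: "(\<Prod>w\<in>W. chi (e w) (t - x' w)) = f t - (if t \<in> Z then f t else 0)" for t
  proof -
    have "(\<Prod>w\<in>W. chi (e w) (t - x' w)) = chi (e w0) (t - x' w0) * (\<Prod>w\<in>W - {w0}. chi (e w) (t - x' w))"
      using W by (simp add: prod.remove)
    also have "(\<Prod>w\<in>W - {w0}. chi (e w) (t - x' w)) = (\<Prod>w\<in>W - {w0}. chi 0 (t - x' w))"
      using e0 by (intro prod.cong) auto
    also have "\<dots> = (if t \<in> Z then 0 else 1)"
    proof (cases "t \<in> Z")
      case True
      then obtain w where "w \<in> W - {w0}" "t = x' w" unfolding Z_def by auto
      then show ?thesis using True W by (auto simp: chi_0 intro!: prod_zero)
    next
      case False
      then have "\<forall>w\<in>W - {w0}. t - x' w \<noteq> 0" unfolding Z_def by auto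
      then show ?thesis using False by (simp add: chi_0)
    qed
    finally show ?thesis by (simp add: f_def)
  qed
  have "(\<Sum>t\<in>UNIV. \<Prod>w\<in>W. chi (e w) (t - x' w)) = (\<Sum>t\<in>UNIV. f t) - (\<Sum>t\<in>UNIV. if t \<in> Z then f t else 0)"
    by (simp add: p sum_subtractf)
  also have "(\<Sum>t\<in>UNIV. f t) = 0" unfolding f_def by (rule sum_chi_shift[OF ew0])
  also have "(\<Sum>t\<in>UNIV. if t \<in> Z then f t else 0) = (\<Sum>t\<in>Z. f t)"
    by (simp add: sum.inter_restrict[symmetric])
  finally have "norm (\<Sum>t\<in>UNIV. \<Prod>w\<in>W. chi (e w) (t - x' w)) = norm (\<Sum>t\<in>Z. f t)" by simp
  also have "\<dots> \<le> (\<Sum>t\<in>Z. norm (f t))" by (rule norm_sum)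
  also have "\<dots> \<le> (\<Sum>t\<in>Z. 1)" by (rule sum_mono) (simp add: f_def norm_chi_le)
  also have "\<dots> = card Z" by simp
  also have "\<dots> \<le> real (card W - 1)" using Zc by simp
  finally show ?thesis .
qed

lemma TB_caseB_sq:
  fixes W :: "nat set"
  assumes W: "finite W" "w0 \<in> W" "w1 \<in> W" "w0 \<noteq> w1"
    and ew: "0 < e w0" "e w0 < m" "0 < e w1" "e w1 < m"
  shows "(\<Sum>x'\<in>PiE W (\<lambda>_. UNIV). (norm (\<Sum>t\<in>UNIV. \<Prod>w\<in>W. chi (e w) (t - x' w)))^2)
          \<le> real q ^ card W * (real q + 1)"
proof -
  define n where "n = card W"
  have n2: "n \<ge> 2" unfolding n_def using W
    by (metis card_2_iff card_mono empty_subsetI finite.emptyI insert_subset)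
  define Tf where "Tf x' = (\<Sum>t\<in>UNIV. \<Prod>w\<in>W. chi (e w) (t - x' w))" for x' :: "nat \<Rightarrow> 'a"
  define \<phi> where "\<phi> t s w y = chi (e w) (t - y) * cnj (chi (e w) (s - y))" for t s :: 'a and w and y :: 'a
  have TT: "Tf x' * cnj (Tf x') = (\<Sum>t\<in>UNIV. \<Sum>s\<in>UNIV. \<Prod>w\<in>W. \<phi> t s w (x' w))" for x'
    unfolding Tf_def \<phi>_def by (simp add: sum_product cnj_sum cnj_prod prod.distrib)
  have sq: "complex_of_real ((norm (Tf x'))^2) = Tf x' * cnj (Tf x')" for x'
    by (rule complex_norm_square)
  have "complex_of_real (\<Sum>x'\<in>PiE W (\<lambda>_. UNIV). (norm (Tf x'))^2)
        = (\<Sum>x'\<in>PiE W (\<lambda>_. UNIV). \<Sum>t\<in>UNIV. \<Sum>s\<in>UNIV. \<Prod>w\<in>W. \<phi> t s w (x' w))"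
    by (simp only: of_real_sum sq TT)
  also have "\<dots> = (\<Sum>t\<in>UNIV. \<Sum>s\<in>UNIV. \<Sum>x'\<in>PiE W (\<lambda>_. UNIV). \<Prod>w\<in>W. \<phi> t s w (x' w))"
    by (simp add: sum.swap[of _ "PiE W (\<lambda>_. UNIV)"])
  also have "\<dots> = (\<Sum>t\<in>UNIV. \<Sum>s\<in>UNIV. \<Prod>w\<in>W. \<Sum>y\<in>UNIV. \<phi> t s w y)"
    using W by (simp add: prod_sum_PiE)
  finally have eq: "complex_of_real (\<Sum>x'\<in>PiE W (\<lambda>_. UNIV). (norm (Tf x'))^2)
        = (\<Sum>t\<in>UNIV. \<Sum>s\<in>UNIV. \<Prod>w\<in>W. \<Sum>y\<in>UNIV. \<phi> t s w y)" .
  have b1: "norm (\<Sum>y\<in>UNIV. \<phi> t s w y) \<le> q" for t s w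
    unfolding \<phi>_def by (rule norm_sum_le_card) (rule norm_chi_pair_le)
  have bprod: "norm (\<Prod>w\<in>W. \<Sum>y\<in>UNIV. \<phi> t s w y) \<le> (if t = s then real q ^ n else real q ^ (n - 2))" for t s
  proof (cases "t = s")
    case True
    have "norm (\<Prod>w\<in>W. \<Sum>y\<in>UNIV. \<phi> t s w y) = (\<Prod>w\<in>W. norm (\<Sum>y\<in>UNIV. \<phi> t s w y))"
      by (rule prod_norm[symmetric])
    also have "\<dots> \<le> (\<Prod>w\<in>W. real q)" by (rule prod_mono) (simp add: b1)
    finally show ?thesis using True by (simp add: n_def)
  next
    case False
    have one: "norm (\<Sum>y\<in>UNIV. \<phi> t s w y) = 1" if "0 < e w" "e w < m" for w
      unfolding \<phi>_def using sum_chi_pair[OF that False] by simp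
    have "norm (\<Prod>w\<in>W. \<Sum>y\<in>UNIV. \<phi> t s w y) = (\<Prod>w\<in>W. norm (\<Sum>y\<in>UNIV. \<phi> t s w y))"
      by (rule prod_norm[symmetric])
    also have "\<dots> \<le> (\<Prod>w\<in>W. if w \<in> {w0, w1} then 1 else real q)"
      by (rule prod_mono) (use b1 one ew in auto)
    also have "\<dots> = (\<Prod>w\<in>W - {w0, w1}. if w \<in> {w0, w1} then 1 else real q) *
                    (\<Prod>w\<in>{w0, w1}. if w \<in> {w0, w1} then 1 else real q)"
      using W by (intro prod.subset_diff) auto
    also have "\<dots> = (\<Prod>w\<in>W - {w0, w1}. real q)"
      by (simp add: prod.neutral)
    also have "\<dots> = real q ^ (n - 2)"
      using W by (simp add: n_def card_Diff_subset numeral_2_eq_2)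
    finally show ?thesis using False by simp
  qed
  have rowsum: "(\<Sum>s\<in>UNIV. (if t = s then real q ^ n else real q ^ (n - 2))) = real q ^ n + (real q - 1) * real q ^ (n - 2)" for t :: 'a
  proof -
    have "(\<Sum>s\<in>UNIV. (if t = s then real q ^ n else real q ^ (n - 2))) =
          (if t = t then real q ^ n else real q ^ (n - 2)) + (\<Sum>s\<in>UNIV - {t}. (if t = s then real q ^ n else real q ^ (n - 2)))"
      by (rule sum.remove) auto
    also have "(\<Sum>s\<in>UNIV - {t}. (if t = s then real q ^ n else real q ^ (n - 2))) = (\<Sum>s\<in>UNIV - {t}. real q ^ (n - 2))"
      by (rule sum.cong) auto
    also have "\<dots> = (real q - 1) * real q ^ (n - 2)"
    proof -
      have "card (UNIV - {t}) = q - 1" by (simp add: card_Diff_singleton q_def)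
      moreover have "q \<ge> 1" using q_pos by simp
      ultimately show ?thesis by (simp add: of_nat_diff)
    qed
    finally show ?thesis by simp
  qed
  have nn: "0 \<le> (\<Sum>x'\<in>PiE W (\<lambda>_. UNIV). (norm (Tf x'))^2)" by (simp add: sum_nonneg)
  have "(\<Sum>x'\<in>PiE W (\<lambda>_. UNIV). (norm (Tf x'))^2) = norm (complex_of_real (\<Sum>x'\<in>PiE W (\<lambda>_. UNIV). (norm (Tf x'))^2))"
    using nn by (simp only: norm_of_real abs_of_nonneg)
  also have "\<dots> = norm (\<Sum>t\<in>UNIV. \<Sum>s\<in>UNIV. \<Prod>w\<in>W. \<Sum>y\<in>UNIV. \<phi> t s w y)" by (simp only: eq)
  also have "\<dots> \<le> (\<Sum>t\<in>UNIV. norm (\<Sum>s\<in>UNIV. \<Prod>w\<in>W. \<Sum>y\<in>UNIV. \<phi> t s w y))" by (rule norm_sum)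
  also have "\<dots> \<le> (\<Sum>t\<in>UNIV. \<Sum>s\<in>UNIV. norm (\<Prod>w\<in>W. \<Sum>y\<in>UNIV. \<phi> t s w y))"
    by (rule sum_mono) (rule norm_sum)
  also have "\<dots> \<le> (\<Sum>t\<in>(UNIV::'a set). \<Sum>s\<in>UNIV. (if t = s then real q ^ n else real q ^ (n - 2)))"
    by (intro sum_mono bprod)
  also have "\<dots> = real q * (real q ^ n + (real q - 1) * real q ^ (n - 2))"
    by (simp add: rowsum q_def)
  also have "\<dots> \<le> real q ^ n * (real q + 1)"
  proof -
    have qn: "real q ^ n = real q ^ (n - 2) * real q * real q"
      using n2 by (metis power_add power2_eq_square le_add_diff_inverse2 mult.assoc)
    have "(real q - 1) * real q ^ (n - 2) \<le> real q * real q ^ (n - 2)"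
      by (intro mult_right_mono) auto
    then have "real q * ((real q - 1) * real q ^ (n - 2)) \<le> real q * (real q * real q ^ (n - 2))"
      by (intro mult_left_mono) auto
    then have "real q * ((real q - 1) * real q ^ (n - 2)) \<le> real q * real q ^ (n - 2) * real q"
      by (simp add: mult.commute mult.left_commute)
    then show ?thesis by (simp add: qn algebra_simps)
  qed
  finally show ?thesis unfolding Tf_def n_def .
qed

lemma TB:
  fixes W :: "nat set"
  assumes W: "finite W" "w0 \<in> W" and ew: "\<And>w. w \<in> W \<Longrightarrow> e w < m" "0 < e w0"
    and small: "real (card W - 1) \<le> sqrt (real q + 1)"
  shows "(\<Sum>x'\<in>PiE W (\<lambda>_. UNIV). norm (\<Sum>t\<in>UNIV. \<Prod>w\<in>W. chi (e w) (t - x' w)))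
           \<le> real q ^ card W * sqrt (real q + 1)"
proof -
  define Tf where "Tf x' = (\<Sum>t\<in>UNIV. \<Prod>w\<in>W. chi (e w) (t - x' w))" for x' :: "nat \<Rightarrow> 'a"
  have cardP: "card (PiE W (\<lambda>_. UNIV::'a set)) = q ^ card W"
    using W by (simp add: card_PiE q_def)
  show ?thesis
  proof (cases "\<exists>w1\<in>W. w1 \<noteq> w0 \<and> e w1 \<noteq> 0")
    case False
    then have "\<And>w. w \<in> W \<Longrightarrow> w \<noteq> w0 \<Longrightarrow> e w = 0" by auto
    note A = TB_caseA[of W w0 e, OF W this ew(2) ew(1)[OF W(2)]]
    have "norm (Tf x') \<le> sqrt (real q + 1)" for x' unfolding Tf_def using small A[of x'] by (meson order_trans)
    then have "(\<Sum>x'\<in>PiE W (\<lambda>_. UNIV). norm (Tf x')) \<le> (\<Sum>x'\<in>PiE W (\<lambda>_. UNIV::'a set). sqrt (real q + 1))"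
      by (intro sum_mono)
    also have "\<dots> = real q ^ card W * sqrt (real q + 1)" by (simp add: cardP)
    finally show ?thesis unfolding Tf_def .
  next
    case True
    then obtain w1 where w1: "w1 \<in> W" "w1 \<noteq> w0" "e w1 \<noteq> 0" by auto
    define L where "L = sqrt (real q + 1)"
    have Lpos: "L > 0" unfolding L_def by simp
    have LL: "L * L = real q + 1" unfolding L_def by simp
    have sqb: "(\<Sum>x'\<in>PiE W (\<lambda>_. UNIV). (norm (Tf x'))^2) \<le> real q ^ card W * (real q + 1)"
      unfolding Tf_def
      by (rule TB_caseB_sq[of W w0 w1 e, OF W(1,2) w1(1) w1(2)[symmetric] ew(2) ew(1)[OF W(2)]]) (use w1 ew in auto)
    have am: "norm (Tf x') \<le> ((norm (Tf x'))^2 / L + L) / 2" for x'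
    proof -
      have "0 \<le> (norm (Tf x') - L)^2" by simp
      then have "2 * L * norm (Tf x') \<le> (norm (Tf x'))^2 + L * L" by (simp add: power2_eq_square algebra_simps)
      then show ?thesis using Lpos by (simp add: field_simps power2_eq_square)
    qed
    have "(\<Sum>x'\<in>PiE W (\<lambda>_. UNIV). norm (Tf x')) \<le> (\<Sum>x'\<in>PiE W (\<lambda>_. UNIV). ((norm (Tf x'))^2 / L + L) / 2)"
      by (intro sum_mono am)
    also have "\<dots> = ((\<Sum>x'\<in>PiE W (\<lambda>_. UNIV). (norm (Tf x'))^2) / L + real q ^ card W * L) / 2"
      by (simp add: sum_divide_distrib[symmetric] sum.distrib cardP)
    also have "\<dots> \<le> (real q ^ card W * (real q + 1) / L + real q ^ card W * L) / 2"
      using sqb Lpos by (simp add: divide_right_mono)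
    also have "real q ^ card W * (real q + 1) / L = real q ^ card W * L"
      using Lpos by (simp add: LL[symmetric])
    finally show ?thesis unfolding Tf_def L_def by (simp add: mult.commute)
  qed
qed

end

lemma card_pairs: "2 * card {(i,j). i < j \<and> j < (n::nat)} = n * (n - 1)"
proof (induction n)
  case 0 then show ?case by simp
next
  case (Suc n)
  have e: "{(i,j). i < j \<and> j < Suc n} = {(i,j). i < j \<and> j < n} \<union> (\<lambda>i. (i,n)) ` {..<n}" by auto
  have f: "finite {(i,j). i < j \<and> j < (n::nat)}"
    by (rule finite_subset[of _ "{..<n} \<times> {..<n}"]) auto
  have disj: "{(i,j). i < j \<and> j < n} \<inter> (\<lambda>i. (i,n)) ` {..<n} = {}" by auto
  have "card {(i,j). i < j \<and> j < Suc n} = card {(i,j). i < j \<and> j < n} + n"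
    unfolding e using f disj by (simp add: card_Un_disjoint card_image inj_on_def)
  then show ?case using Suc.IH by (cases n) (auto simp: algebra_simps)
qed

locale cnt = cyc g m n0 for g :: "'a::{field,finite}" and m n0 :: nat +
  fixes k :: nat
  assumes k3: "k \<ge> 3" and m_eq: "2 * m = k * (k - 1)"
    and q_large: "real (card (UNIV::'a set)) > (real m ^ m)^2"
begin

definition Pr :: "(nat \<times> nat) set" where "Pr = {(i,j). i < j \<and> j < k}"
definition dif :: "nat \<times> nat \<Rightarrow> (nat \<Rightarrow> 'a) \<Rightarrow> 'a" where "dif P x = x (snd P) - x (fst P)"
definition TT :: "(nat \<Rightarrow> 'a) set" where "TT = PiE {..<k} (\<lambda>_. UNIV)"

lemma card_TT: "card TT = q ^ k" by (simp add: TT_def card_PiE q_def)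

lemma finite_TT: "finite TT" by (simp add: TT_def finite_PiE)

lemma finite_Pr: "finite Pr"
  unfolding Pr_def by (rule finite_subset[of _ "{..<k} \<times> {..<k}"]) auto

lemma card_Pr: "card Pr = m"
  using card_pairs[of k] m_eq unfolding Pr_def by simp

lemma q_large': "real q > (real m ^ m)^2" using q_large by (simp add: q_def)

lemma k_le_m: "k \<le> m"
proof -
  have "k * 2 \<le> k * (k - 1)" using k3 by (intro mult_le_mono2) simp
  then have "2 * k \<le> 2 * m" using m_eq by (simp add: mult.commute)
  then show ?thesis by simp
qed

lemma m_ge3: "m \<ge> 3" using k_le_m k3 by simp

lemma m_le_M: "real m \<le> real m ^ m"
  using m_ge3 by (simp add: self_le_power)

lemma small: "real (k - 1 - 1) \<le> sqrt (real q + 1)"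
proof -
  have "real (k - 1 - 1) \<le> real m ^ m" using k_le_m m_le_M by linarith
  also have "\<dots> = sqrt ((real m ^ m)^2)" by simp
  also have "\<dots> \<le> sqrt (real q + 1)" using q_large' by (intro real_sqrt_le_mono) simp
  finally show ?thesis .
qed

lemma S_bound:
  assumes c: "c \<in> PiE Pr (\<lambda>_. {..<m})" and P0: "P0 \<in> Pr" "c P0 \<noteq> 0"
  shows "norm (\<Sum>x\<in>TT. \<Prod>P\<in>Pr. chi (c P) (dif P x)) \<le> real q ^ (k - 1) * sqrt (real q + 1)"
proof -
  obtain u v where uv: "P0 = (u,v)" "u < v" "v < k" using P0(1) unfolding Pr_def by auto
  define W where "W = {..<k} - {v}"
  define pv where "pv w = (min w v, max w v)" for w :: nat
  define e where "e w = c (pv w)" for w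
  define Pv where "Pv = {P\<in>Pr. fst P = v \<or> snd P = v}"
  have cardW: "card W = k - 1" unfolding W_def using uv by simp
  have finW: "finite W" unfolding W_def by simp
  have bij: "bij_betw pv W Pv"
  proof -
    have "inj_on pv W" unfolding inj_on_def pv_def W_def
      by (auto simp: min_def max_def split: if_splits)
    moreover have "pv ` W = Pv"
    proof
      show "pv ` W \<subseteq> Pv" unfolding pv_def W_def Pv_def Pr_def using uv
        by (auto simp: min_def max_def)
      show "Pv \<subseteq> pv ` W"
      proof
        fix P assume "P \<in> Pv"
        then obtain i j where P: "P = (i,j)" "i < j" "j < k" "i = v \<or> j = v"
          unfolding Pv_def Pr_def by auto
        show "P \<in> pv ` W"
        proof (cases "i = v")
          case True
          then have "P = pv j" using P by (simp add: pv_def)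
          moreover have "j \<in> W" using P True by (simp add: W_def)
          ultimately show ?thesis by blast
        next
          case False
          then have "P = pv i" using P by (simp add: pv_def)
          moreover have "i \<in> W" using P False by (simp add: W_def)
          ultimately show ?thesis by blast
        qed
      qed
    qed
    ultimately show ?thesis unfolding bij_betw_def by blast
  qed
  have PvPr: "Pv \<subseteq> Pr" unfolding Pv_def by auto
  define A where "A x' = (\<Prod>P\<in>Pr - Pv. chi (c P) (dif P x'))" for x'
  define Tf where "Tf x' = (\<Sum>t\<in>UNIV. \<Prod>w\<in>W. chi (e w) (t - x' w))" for x' :: "nat \<Rightarrow> 'a"
  have split_prod: "(\<Prod>P\<in>Pr. chi (c P) (dif P (x'(v:=t)))) = A x' * (\<Prod>w\<in>W. chi (e w) (t - x' w))"
    for x' t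
  proof -
    have "(\<Prod>P\<in>Pr. chi (c P) (dif P (x'(v:=t)))) =
          (\<Prod>P\<in>Pr - Pv. chi (c P) (dif P (x'(v:=t)))) * (\<Prod>P\<in>Pv. chi (c P) (dif P (x'(v:=t))))"
      using PvPr finite_Pr by (rule prod.subset_diff)
    also have "(\<Prod>P\<in>Pr - Pv. chi (c P) (dif P (x'(v:=t)))) = A x'"
      unfolding A_def by (intro prod.cong) (auto simp: Pv_def dif_def)
    also have "(\<Prod>P\<in>Pv. chi (c P) (dif P (x'(v:=t)))) = (\<Prod>w\<in>W. chi (c (pv w)) (dif (pv w) (x'(v:=t))))"
      by (rule prod.reindex_bij_betw[OF bij, symmetric])
    also have "\<dots> = (\<Prod>w\<in>W. chi (e w) (t - x' w))"
    proof (rule prod.cong)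
      fix w assume "w \<in> W"
      then have wv: "w \<noteq> v" by (simp add: W_def)
      show "chi (c (pv w)) (dif (pv w) (x'(v:=t))) = chi (e w) (t - x' w)"
      proof (cases "w < v")
        case True then show ?thesis using wv by (simp add: pv_def e_def dif_def)
      next
        case False
        then have "dif (pv w) (x'(v:=t)) = - (t - x' w)" using wv by (simp add: pv_def dif_def)
        then show ?thesis using chi_neg[of "e w" "t - x' w"] by (simp add: e_def)
      qed
    qed simp
    finally show ?thesis .
  qed
  have "(\<Sum>x\<in>TT. \<Prod>P\<in>Pr. chi (c P) (dif P x)) =
        (\<Sum>x'\<in>PiE W (\<lambda>_. UNIV). \<Sum>t\<in>UNIV. \<Prod>P\<in>Pr. chi (c P) (dif P (x'(v:=t))))"
    unfolding TT_def W_def using uv by (intro sum_PiE_split) auto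
  also have "\<dots> = (\<Sum>x'\<in>PiE W (\<lambda>_. UNIV). A x' * Tf x')"
    by (simp add: split_prod Tf_def sum_distrib_left)
  finally have eqS: "(\<Sum>x\<in>TT. \<Prod>P\<in>Pr. chi (c P) (dif P x)) = (\<Sum>x'\<in>PiE W (\<lambda>_. UNIV). A x' * Tf x')" .
  have nA: "norm (A x') \<le> 1" for x'
  proof -
    have "norm (A x') = (\<Prod>P\<in>Pr - Pv. norm (chi (c P) (dif P x')))"
      unfolding A_def by (rule prod_norm[symmetric])
    also have "\<dots> \<le> 1" by (rule prod_le_1) (auto simp: norm_chi_le)
    finally show ?thesis .
  qed
  have "norm (\<Sum>x\<in>TT. \<Prod>P\<in>Pr. chi (c P) (dif P x)) \<le> (\<Sum>x'\<in>PiE W (\<lambda>_. UNIV). norm (A x' * Tf x'))"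
    unfolding eqS by (rule norm_sum)
  also have "\<dots> \<le> (\<Sum>x'\<in>PiE W (\<lambda>_. UNIV). norm (Tf x'))"
    by (intro sum_mono) (simp add: norm_mult mult_left_le_one_le nA)
  also have "\<dots> \<le> real q ^ card W * sqrt (real q + 1)"
    unfolding Tf_def
  proof (rule TB[of W u e])
    show "finite W" by (rule finW)
    show "u \<in> W" using uv by (simp add: W_def)
    show "e w < m" if "w \<in> W" for w
    proof -
      have "pv w \<in> Pv" using bij that by (auto simp: bij_betw_def)
      then have "pv w \<in> Pr" using PvPr by auto
      then show ?thesis using c by (auto simp: e_def)
    qed
    show "0 < e u" using uv P0 by (simp add: e_def pv_def)
    show "real (card W - 1) \<le> sqrt (real q + 1)" using small cardW by simp
  qed
  finally show ?thesis using cardW by simp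
qed

lemma card_zero_set:
  assumes "P \<in> Pr"
  shows "card {x\<in>TT. dif P x = 0} = q ^ (k - 1)"
proof -
  obtain i j where P: "P = (i,j)" "i < j" "j < k" using assms unfolding Pr_def by auto
  have "card {x\<in>TT. dif P x = 0} = (\<Sum>x\<in>TT. if dif P x = 0 then 1 else 0)"
  proof -
    have "(\<Sum>x\<in>TT. if dif P x = 0 then 1 else 0) = (\<Sum>x\<in>{x\<in>TT. dif P x = 0}. (1::nat))"
      by (subst sum.inter_filter[OF finite_TT, symmetric]) simp
    then show ?thesis by simp
  qed
  also have "\<dots> = (\<Sum>x'\<in>PiE ({..<k} - {j}) (\<lambda>_. UNIV). \<Sum>t\<in>(UNIV::'a set). if dif P (x'(j:=t)) = 0 then 1 else 0)"
    unfolding TT_def using P by (intro sum_PiE_split) auto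
  also have "\<dots> = (\<Sum>x'\<in>PiE ({..<k} - {j}) (\<lambda>_. UNIV::'a set). 1)"
  proof (rule sum.cong)
    fix x' :: "nat \<Rightarrow> 'a"
    have "(\<Sum>t\<in>(UNIV::'a set). if dif P (x'(j:=t)) = 0 then 1 else 0) = (\<Sum>t\<in>(UNIV::'a set). if t = x' i then 1 else 0)"
      using P by (intro sum.cong) (auto simp: dif_def)
    also have "\<dots> = 1" by simp
    finally show "(\<Sum>t\<in>(UNIV::'a set). if dif P (x'(j:=t)) = 0 then 1 else 0) = (1::nat)" .
  qed simp
  also have "\<dots> = q ^ (k - 1)" using P by (simp add: card_PiE q_def)
  finally show ?thesis .
qed

definition Inj where "Inj = {x\<in>TT. \<forall>P\<in>Pr. dif P x \<noteq> 0}"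


lemma Inj_bound: "real (card Inj) \<ge> real q ^ k - real m * real q ^ (k - 1)"
proof -
  have sub: "TT - Inj \<subseteq> (\<Union>P\<in>Pr. {x\<in>TT. dif P x = 0})" unfolding Inj_def by auto
  have "card (TT - Inj) \<le> card (\<Union>P\<in>Pr. {x\<in>TT. dif P x = 0})"
    by (rule card_mono[OF _ sub]) (use finite_Pr finite_TT in auto)
  also have "\<dots> \<le> (\<Sum>P\<in>Pr. card {x\<in>TT. dif P x = 0})" by (rule card_UN_le[OF finite_Pr])
  also have "\<dots> = (\<Sum>P\<in>Pr. q ^ (k - 1))" by (rule sum.cong) (auto simp: card_zero_set)
  also have "\<dots> = m * q ^ (k - 1)" by (simp add: card_Pr)
  finally have c1: "card (TT - Inj) \<le> m * q ^ (k - 1)" .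
  have "card Inj + card (TT - Inj) = card TT"
  proof -
    have "Inj \<subseteq> TT" unfolding Inj_def by auto
    moreover have "finite Inj" using finite_TT unfolding Inj_def by simp
    ultimately have "card (TT - Inj) = card TT - card Inj" "card Inj \<le> card TT"
      using finite_TT by (simp_all add: card_Diff_subset card_mono)
    then show ?thesis by simp
  qed
  then have "real (card Inj) = real q ^ k - real (card (TT - Inj))" by (simp add: card_TT flip: of_nat_power)
  moreover have "real (card (TT - Inj)) \<le> real (m * q ^ (k - 1))" using c1
    by (simp only: of_nat_le_iff)
  moreover have "real (m * q ^ (k - 1)) = real m * real q ^ (k - 1)" by simp
  ultimately show ?thesis by linarith
qed

end

lemma final_ineq:
  fixes Q M mm :: real
  assumes Q: "Q > M^2" and M: "M \<ge> mm + 1" and mm: "mm \<ge> 0"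
  shows "(M - 1) * sqrt (Q + 1) < Q - mm"
proof -
  have M1: "M - 1 \<ge> 0" using M mm by simp
  have X: "Q - 2 * mm - (M - 1)^2 \<ge> 1"
  proof -
    have "(M - 1)^2 = M^2 - 2 * M + 1" by (simp add: power2_eq_square algebra_simps)
    then show ?thesis using Q M by linarith
  qed
  have Qpos: "Q \<ge> 0" using Q zero_le_power2[of M] by linarith
  have "Q * (Q - 2 * mm - (M - 1)^2) \<ge> Q * 1" using mult_left_mono[OF X Qpos] .
  moreover have "M^2 - (M - 1)^2 > 0"
  proof -
    have "M^2 - (M - 1)^2 = 2 * M - 1" by (simp add: power2_eq_square algebra_simps)
    then show ?thesis using M mm by linarith
  qed
  moreover have "(Q - mm)^2 - (M - 1)^2 * (Q + 1) = Q * (Q - 2 * mm - (M - 1)^2) + mm^2 - (M - 1)^2"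
    by (simp add: power2_eq_square algebra_simps)
  ultimately have "(M - 1)^2 * (Q + 1) < (Q - mm)^2"
    using Q zero_le_power2[of mm] by linarith
  then have "sqrt ((M - 1)^2 * (Q + 1)) < sqrt ((Q - mm)^2)" by (rule real_sqrt_less_mono)
  moreover have "sqrt ((M - 1)^2 * (Q + 1)) = (M - 1) * sqrt (Q + 1)"
    using M1 by (simp add: real_sqrt_mult)
  moreover have "Q - mm > 0"
  proof -
    have "M^2 \<ge> (mm + 1)^2" using M mm by (intro power_mono) auto
    moreover have "(mm + 1)^2 = mm^2 + 2 * mm + 1" by (simp add: power2_eq_square algebra_simps)
    ultimately show ?thesis using Q mm zero_le_power2[of mm] by linarith
  qed
  ultimately show ?thesis by simp
qed

context cnt
begin

lemma exists_good:
  assumes \<sigma>: "inj_on \<sigma> Pr" "\<sigma> ` Pr \<subseteq> {..<m}"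
  shows "\<exists>x\<in>TT. \<forall>P\<in>Pr. dif P x \<noteq> 0 \<and> [ind (dif P x) = \<sigma> P] (mod m)"
proof -
  define a where "a P j x = chi j (dif P x) * cnj (\<omega> ^ (j * \<sigma> P))" for P j x
  define F where "F x = (\<Prod>P\<in>Pr. \<Sum>j<m. a P j x)" for x
  have Fgood: "dif P x \<noteq> 0 \<and> [ind (dif P x) = \<sigma> P] (mod m)" if "F x \<noteq> 0" "P \<in> Pr" for x P
  proof -
    have nz: "(\<Sum>j<m. a P j x) \<noteq> 0"
    proof
      assume "(\<Sum>j<m. a P j x) = 0"
      then have "F x = 0" unfolding F_def using that(2) finite_Pr by (intro prod_zero) auto
      then show False using that(1) by simp
    qed
    have dnz: "dif P x \<noteq> 0"
    proof
      assume "dif P x = 0"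
      then have "(\<Sum>j<m. a P j x) = 0" by (simp add: a_def)
      then show False using nz by simp
    qed
    have "(\<Sum>j<m. a P j x) = (\<Sum>j<m. chi j (dif P x) * cnj (\<omega> ^ (j * \<sigma> P)))"
      by (simp only: a_def)
    also have "\<dots> = (if [ind (dif P x) = \<sigma> P] (mod m) then of_nat m else 0)"
      by (rule orth[OF dnz])
    finally have "[ind (dif P x) = \<sigma> P] (mod m)" using nz by (cases "[ind (dif P x) = \<sigma> P] (mod m)") auto
    then show ?thesis using dnz by simp
  qed
  have mainsum: "(\<Sum>x\<in>TT. F x) \<noteq> 0"
  proof
    assume sum0: "(\<Sum>x\<in>TT. F x) = 0"
  define C where "C = PiE Pr (\<lambda>_. {..<m})"
  define wt where "wt c = (\<Prod>P\<in>Pr. cnj (\<omega> ^ (c P * \<sigma> P)))" for c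
  define S where "S c = (\<Sum>x\<in>TT. \<Prod>P\<in>Pr. chi (c P) (dif P x))" for c
  have finC: "finite C" unfolding C_def using finite_Pr by (simp add: finite_PiE)
  have Fexp: "F x = (\<Sum>c\<in>C. \<Prod>P\<in>Pr. a P (c P) x)" for x
    unfolding F_def C_def by (rule prod_sum_PiE) (use finite_Pr in auto)
  have "(\<Sum>x\<in>TT. F x) = (\<Sum>c\<in>C. \<Sum>x\<in>TT. \<Prod>P\<in>Pr. a P (c P) x)"
    unfolding Fexp by (rule sum.swap)
  also have "\<dots> = (\<Sum>c\<in>C. wt c * S c)"
  proof (rule sum.cong)
    fix c assume "c \<in> C"
    have "(\<Prod>P\<in>Pr. a P (c P) x) = wt c * (\<Prod>P\<in>Pr. chi (c P) (dif P x))" for x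
      unfolding a_def wt_def prod.distrib by (rule mult.commute)
    then show "(\<Sum>x\<in>TT. \<Prod>P\<in>Pr. a P (c P) x) = wt c * S c"
      unfolding S_def by (simp only: sum_distrib_left)
  qed simp
  finally have sumeq: "(\<Sum>x\<in>TT. F x) = (\<Sum>c\<in>C. wt c * S c)" .
  define c0 where "c0 = (\<lambda>P\<in>Pr. 0::nat)"
  have c0C: "c0 \<in> C" unfolding C_def c0_def using m_pos by auto
  have wt0: "wt c0 = 1" unfolding wt_def c0_def by (rule prod.neutral) simp
  have S0: "S c0 = of_nat (card Inj)"
  proof -
    have "S c0 = (\<Sum>x\<in>TT. if (\<forall>P\<in>Pr. dif P x \<noteq> 0) then 1 else 0)"
      unfolding S_def
    proof (rule sum.cong)
      fix x assume "x \<in> TT"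
      have "(\<Prod>P\<in>Pr. chi (c0 P) (dif P x)) = (\<Prod>P\<in>Pr. if dif P x = 0 then 0 else 1)"
        by (rule prod.cong) (auto simp: c0_def chi_0)
      also have "\<dots> = (if (\<forall>P\<in>Pr. dif P x \<noteq> 0) then 1 else 0)"
      proof (cases "\<forall>P\<in>Pr. dif P x \<noteq> 0")
        case True
        then have "(\<Prod>P\<in>Pr. if dif P x = 0 then 0 else 1) = (\<Prod>P\<in>Pr. (1::complex))"
          by (intro prod.cong) auto
        then show ?thesis using True by simp
      next
        case False
        then obtain P where "P \<in> Pr" "dif P x = 0" by blast
        then have "(\<Prod>P\<in>Pr. if dif P x = 0 then 0 else (1::complex)) = 0"
          using finite_Pr by (intro prod_zero) auto
        then show ?thesis using False by simp
      qed
      finally show "(\<Prod>P\<in>Pr. chi (c0 P) (dif P x)) = (if (\<forall>P\<in>Pr. dif P x \<noteq> 0) then 1 else 0)" .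
    qed simp
    also have "\<dots> = (\<Sum>x\<in>Inj. 1)"
      unfolding Inj_def by (subst sum.inter_filter[OF finite_TT, symmetric]) simp
    finally show ?thesis by simp
  qed
  define B where "B = real q ^ (k - 1) * sqrt (real q + 1)"
  have Bnn: "B \<ge> 0" unfolding B_def by simp
  have eachb: "norm (wt c * S c) \<le> B" if "c \<in> C - {c0}" for c
  proof -
    have cC: "c \<in> C" "c \<noteq> c0" using that by auto
    have "\<exists>P\<in>Pr. c P \<noteq> 0"
    proof (rule ccontr)
      assume "\<not> ?thesis"
      then have "c = c0" using cC(1) c0C unfolding C_def
        by (intro PiE_ext[of c Pr "\<lambda>_. {..<m}" c0]) (auto simp: c0_def)
      then show False using cC(2) by simp
    qed
    then obtain P0 where P0: "P0 \<in> Pr" "c P0 \<noteq> 0" by blast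
    have nw: "norm (wt c) = 1"
    proof -
      have "norm (wt c) = (\<Prod>P\<in>Pr. norm (cnj (\<omega> ^ (c P * \<sigma> P))))"
        unfolding wt_def by (rule prod_norm[symmetric])
      also have "\<dots> = 1" by (intro prod.neutral ballI) (simp only: complex_mod_cnj norm_omega_pow)
      finally show ?thesis .
    qed
    have "norm (S c) \<le> B" unfolding S_def B_def
      by (rule S_bound[OF cC(1)[unfolded C_def] P0])
    then show ?thesis by (simp add: norm_mult nw)
  qed
  have cardC: "card C = m ^ m" unfolding C_def using finite_Pr by (simp add: card_PiE card_Pr)
  have "(\<Sum>c\<in>C. wt c * S c) = wt c0 * S c0 + (\<Sum>c\<in>C - {c0}. wt c * S c)"
    using finC c0C by (rule sum.remove)
  then have "of_nat (card Inj) = - (\<Sum>c\<in>C - {c0}. wt c * S c)"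
    using sum0 sumeq wt0 S0 by (simp add: eq_neg_iff_add_eq_0)
  then have "norm (of_nat (card Inj) :: complex) = norm (\<Sum>c\<in>C - {c0}. wt c * S c)"
    by (simp only: norm_minus_cancel)
  then have "real (card Inj) = norm (\<Sum>c\<in>C - {c0}. wt c * S c)" by simp
  also have "\<dots> \<le> (\<Sum>c\<in>C - {c0}. norm (wt c * S c))" by (rule norm_sum)
  also have "\<dots> \<le> (\<Sum>c\<in>C - {c0}. B)" by (rule sum_mono) (rule eachb)
  also have "\<dots> = real (card C - 1) * B" using finC c0C by (simp add: card_Diff_singleton)
  also have "real (card C - 1) = real m ^ m - 1"
  proof -
    have "card C > 0" using finC c0C by (auto simp: card_gt_0_iff)
    then have "card C \<ge> 1" by simp
    then show ?thesis by (simp add: cardC of_nat_diff)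
  qed
  finally have up: "real (card Inj) \<le> (real m ^ m - 1) * B" .
  have "(real m ^ m - 1) * sqrt (real q + 1) < real q - real m"
  proof (rule final_ineq)
    show "real q > (real m ^ m)^2" by (rule q_large')
    show "real m ^ m \<ge> real m + 1"
    proof -
      have "real m ^ m \<ge> real m ^ 2" using m_ge3 by (intro power_increasing) auto
      moreover have "real m ^ 2 \<ge> real m + 1"
      proof -
        have "real m * real m \<ge> 3 * real m" using m_ge3 by (intro mult_right_mono) auto
        moreover have "real m \<ge> 3" using m_ge3 by simp
        ultimately show ?thesis unfolding power2_eq_square by linarith
      qed
      ultimately show ?thesis by linarith
    qed
    show "real m \<ge> 0" by simp
  qed
  then have "real q ^ (k - 1) * ((real m ^ m - 1) * sqrt (real q + 1)) < real q ^ (k - 1) * (real q - real m)"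
    using q_pos by (intro mult_strict_left_mono) auto
  moreover have "real q ^ (k - 1) * (real q - real m) = real q ^ k - real m * real q ^ (k - 1)"
  proof -
    obtain k' where "k = Suc k'" using k3 by (cases k) auto
    then have "real q ^ k = real q ^ (k - 1) * real q" by (simp add: mult.commute)
    then show ?thesis by (simp add: algebra_simps)
  qed
  ultimately have "(real m ^ m - 1) * B < real q ^ k - real m * real q ^ (k - 1)"
    unfolding B_def by (simp add: algebra_simps)
  then show False using up Inj_bound by linarith
  qed
  then obtain x where "x \<in> TT" "F x \<noteq> 0" by (rule sum.not_neutral_contains_not_neutral)
  then show ?thesis using Fgood by blast
qed

end

context cnt
begin

lemma base_block:
  "\<exists>X::'a set. card X = k \<and> (\<forall>a\<in>X. \<forall>b\<in>X. \<forall>a'\<in>X. \<forall>b'\<in>X. a \<noteq> b \<longrightarrow> a' \<noteq> b' \<longrightarrow>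
       [ind (a - b) = ind (a' - b')] (mod 2*m) \<longrightarrow> a = a' \<and> b = b')"
proof -
  obtain \<sigma> where \<sigma>: "bij_betw \<sigma> Pr {..<m}"
    using bij_betw_iff_card[of Pr "{..<m}"] finite_Pr card_Pr by auto
  then have "inj_on \<sigma> Pr" "\<sigma> ` Pr \<subseteq> {..<m}" by (auto simp: bij_betw_def)
  from exists_good[OF this] obtain x where
    x: "\<forall>P\<in>Pr. dif P x \<noteq> 0 \<and> [ind (dif P x) = \<sigma> P] (mod m)" by blast
  have inj\<sigma>: "inj_on \<sigma> Pr" and \<sigma>m: "\<And>P. P \<in> Pr \<Longrightarrow> \<sigma> P < m" using \<sigma> by (auto simp: bij_betw_def)
  define pp where "pp i j = (min i j, max i j)" for i j :: nat
  have ppPr: "pp i j \<in> Pr" if "i < k" "j < k" "i \<noteq> j" for i j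
    using that unfolding pp_def Pr_def by (auto simp: min_def max_def)
  have neq: "x i \<noteq> x j" if "i < k" "j < k" "i \<noteq> j" for i j
  proof -
    have "dif (pp i j) x \<noteq> 0" using x ppPr[OF that] by blast
    then show ?thesis by (auto simp: dif_def pp_def min_def max_def split: if_splits)
  qed
  have m_n0: "[m * n0 = m] (mod 2*m)"
  proof -
    obtain t where "n0 = 2 * t + 1" using n0_odd by (metis oddE)
    then have "m * n0 = m + (2 * m) * t" by (simp add: algebra_simps)
    then show ?thesis by (simp add: cong_def)
  qed
  have key: "[ind (x i - x j) = ind (dif (pp i j) x) + (if i < j then m else 0)] (mod 2*m)"
    if "i < k" "j < k" "i \<noteq> j" for i j
  proof (cases "i < j")
    case False
    then have "dif (pp i j) x = x i - x j" using that by (simp add: pp_def dif_def min_def max_def)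
    then show ?thesis using False by simp
  next
    case True
    define u where "u = dif (pp i j) x"
    have u: "u = x j - x i" using True by (simp add: u_def pp_def dif_def min_def max_def)
    have unz: "u \<noteq> 0" using neq[OF that] u by simp
    have "x i - x j = (-1) * u" using u by simp
    then have "[ind (x i - x j) = ind (-1) + ind u] (mod N)" using ind_mult[of "-1" u] unz by simp
    moreover have "[ind (-1) + ind u = m * n0 + ind u] (mod N)"
      using ind_minus_one by (intro cong_add) auto
    ultimately have "[ind (x i - x j) = m * n0 + ind u] (mod N)" by (rule cong_trans)
    then have "[ind (x i - x j) = m * n0 + ind u] (mod 2*m)" by (rule cong_N_2m)
    moreover have "[m * n0 + ind u = m + ind u] (mod 2*m)" using m_n0 by (intro cong_add) auto
    ultimately have "[ind (x i - x j) = m + ind u] (mod 2*m)" by (rule cong_trans)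
    then show ?thesis using True by (simp add: u_def add.commute)
  qed
  define X where "X = x ` {..<k}"
  have injx: "inj_on x {..<k}" using neq by (auto simp: inj_on_def)
  have cardX: "card X = k" unfolding X_def using injx by (simp add: card_image)
  have propX: "i = i' \<and> j = j'"
    if ij: "i < k" "j < k" "i \<noteq> j" "i' < k" "j' < k" "i' \<noteq> j'"
      and c: "[ind (x i - x j) = ind (x i' - x j')] (mod 2*m)" for i j i' j'
  proof -
    define P where "P = pp i j"
    define P' where "P' = pp i' j'"
    define s where "s = (if i < j then m else 0)"
    define s' where "s' = (if i' < j' then m else 0)"
    have c2: "[ind (dif P x) + s = ind (dif P' x) + s'] (mod 2*m)"
    proof -
      have "[ind (dif P x) + s = ind (x i - x j)] (mod 2*m)"
        using key[OF ij(1-3)] by (simp add: P_def s_def cong_sym)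
      also have "[ind (x i - x j) = ind (x i' - x j')] (mod 2*m)" by (rule c)
      also have "[ind (x i' - x j') = ind (dif P' x) + s'] (mod 2*m)"
        using key[OF ij(4-6)] by (simp add: P'_def s'_def)
      finally show ?thesis .
    qed
    then have "[ind (dif P x) + s = ind (dif P' x) + s'] (mod m)"
      by (rule cong_dvd_modulus_nat) simp
    then have "[ind (dif P x) = ind (dif P' x)] (mod m)"
      by (auto simp: s_def s'_def cong_def split: if_splits)
    moreover have PPr: "P \<in> Pr" "P' \<in> Pr" using ppPr ij by (auto simp: P_def P'_def)
    ultimately have "[\<sigma> P = \<sigma> P'] (mod m)" using x
      by (metis cong_sym cong_trans)
    then have "\<sigma> P = \<sigma> P'" using \<sigma>m[OF PPr(1)] \<sigma>m[OF PPr(2)] by (intro cong_less_modulus_unique_nat)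
    then have PP: "P = P'" using inj\<sigma> PPr by (auto simp: inj_on_def)
    then have "[ind (dif P x) + s = ind (dif P x) + s'] (mod 2*m)" using c2 by simp
    then have "[s = s'] (mod 2*m)" by (simp add: cong_add_lcancel_nat)
    then have "s = s'" using m_pos by (intro cong_less_modulus_unique_nat) (auto simp: s_def s'_def)
    then have "(i < j) = (i' < j')" using m_pos by (auto simp: s_def s'_def split: if_splits)
    then show ?thesis using PP ij by (auto simp: P_def P'_def pp_def min_def max_def split: if_splits)
  qed
  show ?thesis
  proof (rule exI[of _ X], rule conjI[OF cardX], intro ballI impI)
    fix a b a' b' assume abX: "a \<in> X" "b \<in> X" "a' \<in> X" "b' \<in> X" and ne: "a \<noteq> b" "a' \<noteq> b'"
      and c: "[ind (a - b) = ind (a' - b')] (mod 2*m)"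
    obtain i j i' j' where "i < k" "j < k" "i' < k" "j' < k" "a = x i" "b = x j" "a' = x i'" "b' = x j'"
      using abX unfolding X_def by auto
    then show "a = a' \<and> b = b'" using propX[of i j i' j'] ne c by auto
  qed
qed

end

locale aff =
  fixes H0 :: "'a::{field,finite} set" and X :: "'a set" and k :: nat
  assumes H0_sub: "0 \<notin> H0" and H0_one: "1 \<in> H0"
    and H0_mult: "\<And>x y. x \<in> H0 \<Longrightarrow> y \<in> H0 \<Longrightarrow> x * y \<in> H0"
    and H0_inv: "\<And>x. x \<in> H0 \<Longrightarrow> inverse x \<in> H0"
    and X_card: "card X = k" and k2: "k \<ge> 2"
    and P1: "\<And>a b a' b'. a \<in> X \<Longrightarrow> b \<in> X \<Longrightarrow> a' \<in> X \<Longrightarrow> b' \<in> X \<Longrightarrow> a \<noteq> b \<Longrightarrow> a' \<noteq> b' \<Longrightarrow>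
              (a - b) / (a' - b') \<in> H0 \<Longrightarrow> a = a' \<and> b = b'"
    and P2: "\<And>\<delta>. \<delta> \<noteq> 0 \<Longrightarrow> \<exists>a\<in>X. \<exists>b\<in>X. a \<noteq> b \<and> \<delta> / (a - b) \<in> H0"
begin

abbreviation G where "G \<equiv> affine_group H0"

lemma carrier_G: "carrier G = {(a,b). a \<in> H0}" by (simp add: affine_group_def)
lemma mult_G: "x \<otimes>\<^bsub>G\<^esub> y = (fst x * fst y, fst x * snd y + snd x)"
  by (simp add: affine_group_def case_prod_unfold)
lemma one_G: "\<one>\<^bsub>G\<^esub> = (1, 0)" by (simp add: affine_group_def)

lemma H0_nz: "a \<in> H0 \<Longrightarrow> a \<noteq> 0" using H0_sub by auto

lemma group_G: "group G"
proof (rule groupI)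
  show "x \<otimes>\<^bsub>G\<^esub> y \<in> carrier G" if "x \<in> carrier G" "y \<in> carrier G" for x y
    using that by (auto simp: carrier_G mult_G H0_mult)
  show "\<one>\<^bsub>G\<^esub> \<in> carrier G" by (simp add: carrier_G one_G H0_one)
  show "x \<otimes>\<^bsub>G\<^esub> y \<otimes>\<^bsub>G\<^esub> z = x \<otimes>\<^bsub>G\<^esub> (y \<otimes>\<^bsub>G\<^esub> z)" for x y z
    by (simp add: mult_G algebra_simps)
  show "\<one>\<^bsub>G\<^esub> \<otimes>\<^bsub>G\<^esub> x = x" for x by (simp add: mult_G one_G)
  show "\<exists>y\<in>carrier G. y \<otimes>\<^bsub>G\<^esub> x = \<one>\<^bsub>G\<^esub>" if "x \<in> carrier G" for x
  proof -
    have a: "fst x \<in> H0" using that by (auto simp: carrier_G)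
    then have "fst x \<noteq> 0" by (rule H0_nz)
    then show ?thesis using a H0_inv
      by (intro bexI[of _ "(inverse (fst x), - (snd x / fst x))"]) (auto simp: carrier_G mult_G one_G field_simps)
  qed
qed

interpretation grp: group G by (rule group_G)

definition act :: "'a \<times> 'a \<Rightarrow> 'a \<Rightarrow> 'a" where "act h z = fst h * z + snd h"
definition blk :: "'a \<times> 'a \<Rightarrow> 'a set" where "blk h = act h ` X"

lemma act_mult: "act (x \<otimes>\<^bsub>G\<^esub> y) z = act x (act y z)"
  by (simp add: act_def mult_G algebra_simps)

lemma act_one: "act \<one>\<^bsub>G\<^esub> z = z" by (simp add: act_def one_G)

lemma act_inv1: "h \<in> carrier G \<Longrightarrow> act (inv\<^bsub>G\<^esub> h) (act h z) = z"
  by (metis act_mult act_one grp.l_inv)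

lemma act_inv2: "h \<in> carrier G \<Longrightarrow> act h (act (inv\<^bsub>G\<^esub> h) z) = z"
  by (metis act_mult act_one grp.r_inv)

lemma blk_one: "blk \<one>\<^bsub>G\<^esub> = X" by (simp add: blk_def act_one)

lemma act_inj: "h \<in> carrier G \<Longrightarrow> inj (act h)"
  by (metis act_inv1 inj_on_inverseI)

lemma card_blk: assumes "h \<in> carrier G" shows "card (blk h) = k"
proof -
  have "inj_on (act h) X" using act_inj[OF assms] by (rule inj_on_subset) simp
  then show ?thesis unfolding blk_def using X_card by (simp add: card_image)
qed

lemma finite_X: "finite X" by simp

lemma U_ex: assumes "u \<noteq> w" shows "\<exists>h\<in>carrier G. u \<in> blk h \<and> w \<in> blk h"
proof -
  obtain a b where ab: "a \<in> X" "b \<in> X" "a \<noteq> b" "(u - w) / (a - b) \<in> H0"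
    using P2[of "u - w"] assms by auto
  define \<alpha> where "\<alpha> = (u - w) / (a - b)"
  define h where "h = (\<alpha>, u - \<alpha> * a)"
  have "act h a = u" by (simp add: act_def h_def)
  moreover have "act h b = w"
  proof -
    have "\<alpha> * (a - b) = u - w" using ab by (simp add: \<alpha>_def)
    then show ?thesis by (simp add: act_def h_def algebra_simps)
  qed
  moreover have "h \<in> carrier G" using ab by (simp add: carrier_G h_def \<alpha>_def)
  ultimately show ?thesis using ab unfolding blk_def by blast
qed

lemma U_uniq:
  assumes h: "h \<in> carrier G" "h' \<in> carrier G" and uw: "u \<noteq> w"
    and in1: "u \<in> blk h" "w \<in> blk h" and in2: "u \<in> blk h'" "w \<in> blk h'"
  shows "h = h'"
proof -
  obtain a b where ab: "a \<in> X" "b \<in> X" "u = act h a" "w = act h b" using in1 unfolding blk_def by auto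
  obtain a' b' where ab': "a' \<in> X" "b' \<in> X" "u = act h' a'" "w = act h' b'" using in2 unfolding blk_def by auto
  have hH: "fst h \<in> H0" "fst h' \<in> H0" using h by (auto simp: carrier_G)
  have nz: "fst h \<noteq> 0" "fst h' \<noteq> 0" using hH H0_nz by auto
  have neq: "a \<noteq> b" "a' \<noteq> b'" using uw ab ab' by auto
  have e1: "u - w = fst h * (a - b)" using ab by (simp add: act_def algebra_simps)
  have e2: "u - w = fst h' * (a' - b')" using ab' by (simp add: act_def algebra_simps)
  have "(a - b) / (a' - b') = fst h' * inverse (fst h)"
  proof -
    have "fst h * (a - b) = fst h' * (a' - b')" using e1 e2 by simp
    then show ?thesis using nz neq by (simp add: field_simps)
  qed
  also have "\<dots> \<in> H0" using hH H0_mult H0_inv by auto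
  finally have "a = a' \<and> b = b'" using P1[OF ab(1,2) ab'(1,2) neq] by simp
  then have "fst h = fst h'" using e1 e2 neq by simp
  moreover have "snd h = snd h'" using ab ab' \<open>a = a' \<and> b = b'\<close> calculation by (simp add: act_def)
  ultimately show ?thesis by (simp add: prod_eq_iff)
qed

lemma meet2:
  assumes "h \<in> carrier G" "u \<noteq> w" "u \<in> blk h" "w \<in> blk h" "u \<in> X" "w \<in> X"
  shows "h = \<one>\<^bsub>G\<^esub>"
  using U_uniq[OF assms(1) grp.one_closed assms(2-4)] assms(5,6) by (simp add: blk_one)

definition hh :: "'a \<Rightarrow> 'a \<Rightarrow> 'a \<times> 'a" where
  "hh u w = (THE h. h \<in> carrier G \<and> u \<in> blk h \<and> w \<in> blk h)"

lemma hh_prop: assumes "u \<noteq> w" shows "hh u w \<in> carrier G" "u \<in> blk (hh u w)" "w \<in> blk (hh u w)"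
proof -
  have "\<exists>!h. h \<in> carrier G \<and> u \<in> blk h \<and> w \<in> blk h"
    using U_ex[OF assms] U_uniq[OF _ _ assms] by blast
  then have "hh u w \<in> carrier G \<and> u \<in> blk (hh u w) \<and> w \<in> blk (hh u w)"
    unfolding hh_def by (rule theI')
  then show "hh u w \<in> carrier G" "u \<in> blk (hh u w)" "w \<in> blk (hh u w)" by auto
qed

lemma hh_eq: "u \<noteq> w \<Longrightarrow> h \<in> carrier G \<Longrightarrow> u \<in> blk h \<Longrightarrow> w \<in> blk h \<Longrightarrow> hh u w = h"
  using U_uniq hh_prop by blast

lemma thr_card: "card {h\<in>carrier G. z \<in> blk h} = k * card H0"
proof -
  define f where "f p = (snd p, z - snd p * fst p)" for p :: "'a \<times> 'a"
  have inj: "inj_on f (X \<times> H0)"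
  proof (rule inj_onI)
    fix p p' assume "p \<in> X \<times> H0" "p' \<in> X \<times> H0" "f p = f p'"
    then have "snd p = snd p'" "snd p * fst p = snd p * fst p'" "snd p \<noteq> 0"
      using H0_nz by (auto simp: f_def)
    then show "p = p'" by (simp add: prod_eq_iff)
  qed
  have img: "f ` (X \<times> H0) = {h\<in>carrier G. z \<in> blk h}"
  proof
    show "f ` (X \<times> H0) \<subseteq> {h\<in>carrier G. z \<in> blk h}"
    proof
      fix h assume "h \<in> f ` (X \<times> H0)"
      then obtain a \<alpha> where "a \<in> X" "\<alpha> \<in> H0" "h = (\<alpha>, z - \<alpha> * a)" by (auto simp: f_def)
      moreover then have "act h a = z" by (simp add: act_def)
      ultimately have "z \<in> blk h" unfolding blk_def by (intro rev_image_eqI[of a X z "act h"]) auto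
      then show "h \<in> {h\<in>carrier G. z \<in> blk h}" using \<open>\<alpha> \<in> H0\<close> \<open>h = _\<close> by (auto simp: carrier_G)
    qed
    show "{h\<in>carrier G. z \<in> blk h} \<subseteq> f ` (X \<times> H0)"
    proof
      fix h assume "h \<in> {h\<in>carrier G. z \<in> blk h}"
      then obtain a where a: "a \<in> X" "fst h \<in> H0" "z = act h a" by (auto simp: carrier_G blk_def)
      then have "h = f (a, fst h)" by (simp add: f_def act_def prod_eq_iff)
      then show "h \<in> f ` (X \<times> H0)" using a by blast
    qed
  qed
  have "card {h\<in>carrier G. z \<in> blk h} = card (X \<times> H0)" using inj img card_image by fastforce
  also have "\<dots> = k * card H0" by (simp add: card_cartesian_product X_card)
  finally show ?thesis .
qed

end

context aff
begin

interpretation grp: group G by (rule group_G)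

definition D where "D = {h\<in>carrier G. h \<noteq> \<one>\<^bsub>G\<^esub> \<and> blk h \<inter> X \<noteq> {}}"

definition Sset where
  "Sset e = {y\<in>carrier G. y \<noteq> \<one>\<^bsub>G\<^esub> \<and> y \<noteq> e \<and> blk y \<inter> X \<noteq> {} \<and> blk y \<inter> blk e \<noteq> {}}"

lemma finite_carrier: "finite (carrier G)"
  by (rule finite_subset[of _ UNIV]) auto

lemma card_carrier: "card (carrier G) = card H0 * card (UNIV::'a set)"
proof -
  have "carrier G = H0 \<times> UNIV" by (auto simp: carrier_G)
  then show ?thesis by (simp add: card_cartesian_product)
qed

lemma one_in_thr: "z \<in> X \<Longrightarrow> \<one>\<^bsub>G\<^esub> \<in> {h\<in>carrier G. z \<in> blk h}"
  by (simp add: blk_one)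

lemma card_D: "card D = k * (k * card H0 - 1)"
proof -
  define F where "F z = {h\<in>carrier G. z \<in> blk h} - {\<one>\<^bsub>G\<^esub>}" for z
  have "D = (\<Union>z\<in>X. F z)" unfolding D_def F_def by auto
  moreover have "card (\<Union>z\<in>X. F z) = (\<Sum>z\<in>X. card (F z))"
  proof (rule card_UN_disjoint)
    show "finite X" by simp
    show "\<forall>z\<in>X. finite (F z)" unfolding F_def using finite_carrier by auto
    show "\<forall>z\<in>X. \<forall>z'\<in>X. z \<noteq> z' \<longrightarrow> F z \<inter> F z' = {}"
    proof (intro ballI impI)
      fix z z' assume zz: "z \<in> X" "z' \<in> X" "z \<noteq> z'"
      show "F z \<inter> F z' = {}"
      proof (rule ccontr)
        assume "F z \<inter> F z' \<noteq> {}"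
        then obtain h where "h \<in> carrier G" "z \<in> blk h" "z' \<in> blk h" "h \<noteq> \<one>\<^bsub>G\<^esub>" unfolding F_def by auto
        then show False using meet2 zz by blast
      qed
    qed
  qed
  moreover have "card (F z) = k * card H0 - 1" if "z \<in> X" for z
    unfolding F_def using one_in_thr[OF that] finite_carrier thr_card by (simp add: card_Diff_singleton)
  ultimately show ?thesis using X_card by simp
qed

lemma one_notin_D: "\<one>\<^bsub>G\<^esub> \<notin> D" by (simp add: D_def)

lemma D_sub: "D \<subseteq> carrier G" by (auto simp: D_def)

lemma blk_meet_inv:
  assumes "h \<in> carrier G"
  shows "blk h \<inter> X \<noteq> {} \<longleftrightarrow> X \<inter> blk (inv\<^bsub>G\<^esub> h) \<noteq> {}"
proof
  assume "blk h \<inter> X \<noteq> {}"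
  then obtain a where a: "a \<in> X" "act h a \<in> X" unfolding blk_def by auto
  then have "a = act (inv\<^bsub>G\<^esub> h) (act h a)" using act_inv1[OF assms] by simp
  then have "a \<in> blk (inv\<^bsub>G\<^esub> h)" using a unfolding blk_def by blast
  then show "X \<inter> blk (inv\<^bsub>G\<^esub> h) \<noteq> {}" using a by blast
next
  assume "X \<inter> blk (inv\<^bsub>G\<^esub> h) \<noteq> {}"
  then obtain a where a: "a \<in> X" "act (inv\<^bsub>G\<^esub> h) a \<in> X" unfolding blk_def by auto
  then have "a = act h (act (inv\<^bsub>G\<^esub> h) a)" using act_inv2[OF assms] by simp
  then have "a \<in> blk h" using a unfolding blk_def by blast
  then show "blk h \<inter> X \<noteq> {}" using a by blast
qed

lemma inv_D: "(\<lambda>x. inv\<^bsub>G\<^esub> x) ` D = D"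
proof -
  have *: "inv\<^bsub>G\<^esub> h \<in> D" if "h \<in> D" for h
  proof -
    have h: "h \<in> carrier G" "h \<noteq> \<one>\<^bsub>G\<^esub>" "blk h \<inter> X \<noteq> {}" using that by (auto simp: D_def)
    have "inv\<^bsub>G\<^esub> h \<noteq> \<one>\<^bsub>G\<^esub>" using h by (metis grp.inv_inv grp.inv_one)
    moreover have "blk (inv\<^bsub>G\<^esub> h) \<inter> X \<noteq> {}" using blk_meet_inv[OF h(1)] h(3) by blast
    ultimately show ?thesis using h by (simp add: D_def)
  qed
  show ?thesis
  proof
    show "(\<lambda>x. inv\<^bsub>G\<^esub> x) ` D \<subseteq> D" using * by blast
    show "D \<subseteq> (\<lambda>x. inv\<^bsub>G\<^esub> x) ` D"
    proof
      fix h assume "h \<in> D"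
      then have "h = inv\<^bsub>G\<^esub> (inv\<^bsub>G\<^esub> h)" "inv\<^bsub>G\<^esub> h \<in> D" using * D_sub by auto
      then show "h \<in> (\<lambda>x. inv\<^bsub>G\<^esub> x) ` D" by blast
    qed
  qed
qed

lemma pairs_eq:
  assumes g: "g \<in> carrier G" "g \<noteq> \<one>\<^bsub>G\<^esub>"
  shows "card {(x, y). x \<in> D \<and> y \<in> D \<and> x \<otimes>\<^bsub>G\<^esub> inv\<^bsub>G\<^esub> y = g} = card (Sset (inv\<^bsub>G\<^esub> g))"
proof -
  let ?e = "inv\<^bsub>G\<^esub> g"
  have eC: "?e \<in> carrier G" using g by simp
  have A: "{(x, y). x \<in> D \<and> y \<in> D \<and> x \<otimes>\<^bsub>G\<^esub> inv\<^bsub>G\<^esub> y = g} = (\<lambda>y. (g \<otimes>\<^bsub>G\<^esub> y, y)) ` {y\<in>D. g \<otimes>\<^bsub>G\<^esub> y \<in> D}"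
  proof (intro Set.set_eqI iffI)
    fix p assume "p \<in> {(x, y). x \<in> D \<and> y \<in> D \<and> x \<otimes>\<^bsub>G\<^esub> inv\<^bsub>G\<^esub> y = g}"
    then obtain x y where p: "p = (x, y)" "x \<in> D" "y \<in> D" "x \<otimes>\<^bsub>G\<^esub> inv\<^bsub>G\<^esub> y = g" by auto
    then have "x = g \<otimes>\<^bsub>G\<^esub> y" using D_sub g grp.inv_solve_right' by blast
    then show "p \<in> (\<lambda>y. (g \<otimes>\<^bsub>G\<^esub> y, y)) ` {y\<in>D. g \<otimes>\<^bsub>G\<^esub> y \<in> D}" using p by auto
  next
    fix p assume "p \<in> (\<lambda>y. (g \<otimes>\<^bsub>G\<^esub> y, y)) ` {y\<in>D. g \<otimes>\<^bsub>G\<^esub> y \<in> D}"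
    then obtain y where p: "p = (g \<otimes>\<^bsub>G\<^esub> y, y)" "y \<in> D" "g \<otimes>\<^bsub>G\<^esub> y \<in> D" by auto
    then have "(g \<otimes>\<^bsub>G\<^esub> y) \<otimes>\<^bsub>G\<^esub> inv\<^bsub>G\<^esub> y = g" using D_sub g grp.inv_solve_right' by blast
    then show "p \<in> {(x, y). x \<in> D \<and> y \<in> D \<and> x \<otimes>\<^bsub>G\<^esub> inv\<^bsub>G\<^esub> y = g}" using p by auto
  qed
  have B: "{y\<in>D. g \<otimes>\<^bsub>G\<^esub> y \<in> D} = Sset ?e"
  proof (rule Set.set_eqI)
    fix y
    show "y \<in> {y\<in>D. g \<otimes>\<^bsub>G\<^esub> y \<in> D} \<longleftrightarrow> y \<in> Sset ?e"
    proof (cases "y \<in> carrier G")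
      case False then show ?thesis by (simp add: D_def Sset_def)
    next
      case True
      have gy: "g \<otimes>\<^bsub>G\<^esub> y \<in> carrier G" using True g by simp
      have one: "g \<otimes>\<^bsub>G\<^esub> y = \<one>\<^bsub>G\<^esub> \<longleftrightarrow> y = ?e"
        using True g by (metis grp.inv_equality grp.inv_inv grp.inv_closed grp.r_inv)
      have bm: "blk (g \<otimes>\<^bsub>G\<^esub> y) \<inter> X \<noteq> {} \<longleftrightarrow> blk y \<inter> blk ?e \<noteq> {}"
      proof
        assume "blk (g \<otimes>\<^bsub>G\<^esub> y) \<inter> X \<noteq> {}"
        then obtain a where a: "a \<in> X" "act g (act y a) \<in> X" unfolding blk_def by (auto simp: act_mult)
        then have "act y a = act ?e (act g (act y a))" using act_inv1[OF g(1)] by simp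
        then have "act y a \<in> blk ?e" using a unfolding blk_def by blast
        then show "blk y \<inter> blk ?e \<noteq> {}" using a unfolding blk_def by blast
      next
        assume "blk y \<inter> blk ?e \<noteq> {}"
        then obtain a b where ab: "a \<in> X" "b \<in> X" "act y a = act ?e b" unfolding blk_def by auto
        then have "act g (act y a) = b" using act_inv2[OF g(1)] by simp
        then have "act (g \<otimes>\<^bsub>G\<^esub> y) a \<in> X" using ab by (simp add: act_mult)
        then show "blk (g \<otimes>\<^bsub>G\<^esub> y) \<inter> X \<noteq> {}" using ab unfolding blk_def by blast
      qed
      show ?thesis using True gy one bm by (auto simp: D_def Sset_def)
    qed
  qed
  have inj: "inj_on (\<lambda>y. (g \<otimes>\<^bsub>G\<^esub> y, y)) {y\<in>D. g \<otimes>\<^bsub>G\<^esub> y \<in> D}" by (auto simp: inj_on_def)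
  show ?thesis unfolding A B[symmetric] using card_image[OF inj] by simp
qed

lemma g_in_D_iff:
  assumes "g \<in> carrier G" "g \<noteq> \<one>\<^bsub>G\<^esub>"
  shows "g \<in> D \<longleftrightarrow> X \<inter> blk (inv\<^bsub>G\<^esub> g) \<noteq> {}"
  using blk_meet_inv[OF assms(1)] assms by (auto simp: D_def)

end

context aff
begin

interpretation grp: group G by (rule group_G)

lemma count_disj:
  assumes e: "e \<in> carrier G" "e \<noteq> \<one>\<^bsub>G\<^esub>" and dj: "X \<inter> blk e = {}"
  shows "card (Sset e) = k * k"
proof -
  let ?Y = "blk e"
  let ?f = "\<lambda>p. hh (fst p) (snd p)"
  have neq: "u \<noteq> w" if "u \<in> X" "w \<in> ?Y" for u w using that dj by auto
  have img: "Sset e = ?f ` (X \<times> ?Y)"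
  proof
    show "Sset e \<subseteq> ?f ` (X \<times> ?Y)"
    proof
      fix y assume "y \<in> Sset e"
      then have y: "y \<in> carrier G" "blk y \<inter> X \<noteq> {}" "blk y \<inter> ?Y \<noteq> {}" by (auto simp: Sset_def)
      then obtain u w where uw: "u \<in> blk y" "u \<in> X" "w \<in> blk y" "w \<in> ?Y" by blast
      then have "y = hh u w" using hh_eq[OF neq[OF uw(2,4)] y(1) uw(1,3)] by simp
      then show "y \<in> ?f ` (X \<times> ?Y)" using uw by force
    qed
    show "?f ` (X \<times> ?Y) \<subseteq> Sset e"
    proof
      fix y assume "y \<in> ?f ` (X \<times> ?Y)"
      then obtain u w where uw: "u \<in> X" "w \<in> ?Y" "y = hh u w" by auto
      have uw': "u \<noteq> w" using neq uw by auto
      note hp = hh_prop[OF uw']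
      have "y \<noteq> \<one>\<^bsub>G\<^esub>"
      proof
        assume "y = \<one>\<^bsub>G\<^esub>" then have "w \<in> X" using hp uw by (simp add: blk_one)
        then show False using uw dj by auto
      qed
      moreover have "y \<noteq> e"
      proof
        assume "y = e" then have "u \<in> ?Y" using hp uw by simp
        then show False using uw dj by auto
      qed
      ultimately show "y \<in> Sset e" using hp uw unfolding Sset_def by blast
    qed
  qed
  have inj: "inj_on ?f (X \<times> ?Y)"
  proof (rule inj_onI)
    fix p p' assume p: "p \<in> X \<times> ?Y" "p' \<in> X \<times> ?Y" "?f p = ?f p'"
    obtain u w u' w' where uw: "p = (u,w)" "p' = (u',w')" "u \<in> X" "w \<in> ?Y" "u' \<in> X" "w' \<in> ?Y"
      using p by auto
    define h where "h = hh u w"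
    have n1: "u \<noteq> w" "u' \<noteq> w'" using neq uw by auto
    have hp: "h \<in> carrier G" "u \<in> blk h" "w \<in> blk h" "u' \<in> blk h" "w' \<in> blk h"
      using hh_prop[OF n1(1)] hh_prop[OF n1(2)] p(3) uw by (auto simp: h_def)
    have "u = u'"
    proof (rule ccontr)
      assume "u \<noteq> u'"
      then have "h = \<one>\<^bsub>G\<^esub>" using meet2[OF hp(1) _ hp(2) hp(4)] uw by auto
      then show False using hp(3) uw dj by (auto simp: blk_one)
    qed
    moreover have "w = w'"
    proof (rule ccontr)
      assume "w \<noteq> w'"
      then have "h = e" using U_uniq[OF hp(1) e(1) _ hp(3) hp(5)] uw by auto
      then show False using hp(2) uw dj by auto
    qed
    ultimately show "p = p'" using uw by simp
  qed
  have "card (Sset e) = card (X \<times> ?Y)" unfolding img using card_image[OF inj] .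
  also have "\<dots> = k * k" using X_card card_blk[OF e(1)] by (simp add: card_cartesian_product)
  finally show ?thesis .
qed

lemma count_meet:
  assumes e: "e \<in> carrier G" "e \<noteq> \<one>\<^bsub>G\<^esub>" and z: "z \<in> X" "z \<in> blk e"
  shows "card (Sset e) = (k * card H0 - 2) + (k - 1) * (k - 1)"
proof -
  let ?Y = "blk e"
  let ?f = "\<lambda>p. hh (fst p) (snd p)"
  have XY: "X \<inter> ?Y = {z}"
  proof
    show "X \<inter> ?Y \<subseteq> {z}"
    proof
      fix z' assume z': "z' \<in> X \<inter> ?Y"
      show "z' \<in> {z}"
      proof (rule ccontr)
        assume "z' \<notin> {z}"
        then have "e = \<one>\<^bsub>G\<^esub>" using meet2[OF e(1), of z z'] z z' by auto
        then show False using e by simp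
      qed
    qed
    show "{z} \<subseteq> X \<inter> ?Y" using z by auto
  qed
  define S1 where "S1 = {y\<in>carrier G. z \<in> blk y} - {\<one>\<^bsub>G\<^esub>, e}"
  define S2 where "S2 = ?f ` ((X - {z}) \<times> (?Y - {z}))"
  have neq: "u \<noteq> w" if "u \<in> X - {z}" "w \<in> ?Y - {z}" for u w using that XY by auto
  have S2prop: "y \<in> carrier G \<and> u \<in> blk y \<and> w \<in> blk y \<and> y \<noteq> \<one>\<^bsub>G\<^esub> \<and> y \<noteq> e \<and> z \<notin> blk y"
    if "u \<in> X - {z}" "w \<in> ?Y - {z}" "y = hh u w" for u w y
  proof -
    have uw: "u \<noteq> w" using neq that by auto
    note hp = hh_prop[OF uw]
    have n1: "y \<noteq> \<one>\<^bsub>G\<^esub>"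
    proof
      assume "y = \<one>\<^bsub>G\<^esub>" then have "w \<in> X" using hp that by (simp add: blk_one)
      then show False using that XY by auto
    qed
    have n2: "y \<noteq> e"
    proof
      assume "y = e" then have "u \<in> ?Y" using hp that by simp
      then show False using that XY by auto
    qed
    have n3: "z \<notin> blk y"
    proof
      assume "z \<in> blk y"
      then have "y = \<one>\<^bsub>G\<^esub>" using meet2[of y z u] hp that z by auto
      then show False using n1 by simp
    qed
    show ?thesis using hp that n1 n2 n3 by simp
  qed
  have un: "Sset e = S1 \<union> S2"
  proof
    show "Sset e \<subseteq> S1 \<union> S2"
    proof
      fix y assume "y \<in> Sset e"
      then have y: "y \<in> carrier G" "y \<noteq> \<one>\<^bsub>G\<^esub>" "y \<noteq> e" "blk y \<inter> X \<noteq> {}" "blk y \<inter> ?Y \<noteq> {}"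
        by (auto simp: Sset_def)
      show "y \<in> S1 \<union> S2"
      proof (cases "z \<in> blk y")
        case True then show ?thesis using y by (simp add: S1_def)
      next
        case False
        obtain u w where uw: "u \<in> blk y" "u \<in> X" "w \<in> blk y" "w \<in> ?Y" using y by blast
        have uw': "u \<in> X - {z}" "w \<in> ?Y - {z}" using uw False by auto
        then have "y = hh u w" using hh_eq[OF neq[OF uw'] y(1) uw(1,3)] by simp
        then show ?thesis using uw' by (force simp: S2_def)
      qed
    qed
    show "S1 \<union> S2 \<subseteq> Sset e"
    proof
      fix y assume "y \<in> S1 \<union> S2"
      then show "y \<in> Sset e"
      proof
        assume "y \<in> S1"
        then show ?thesis using z unfolding S1_def Sset_def by blast
      next
        assume "y \<in> S2"
        then obtain p where p: "p \<in> (X - {z}) \<times> (?Y - {z})" "y = ?f p"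
          unfolding S2_def by (rule imageE)
        then have uw: "fst p \<in> X - {z}" "snd p \<in> ?Y - {z}" "y = hh (fst p) (snd p)" by auto
        then show ?thesis using S2prop[OF uw] unfolding Sset_def by blast
      qed
    qed
  qed
  have disj: "S1 \<inter> S2 = {}"
  proof (rule ccontr)
    assume "S1 \<inter> S2 \<noteq> {}"
    then obtain y where "y \<in> S1" "y \<in> S2" by blast
    from \<open>y \<in> S2\<close> obtain p where p: "p \<in> (X - {z}) \<times> (?Y - {z})" "y = ?f p"
      unfolding S2_def by (rule imageE)
    then have uw: "fst p \<in> X - {z}" "snd p \<in> ?Y - {z}" "y = hh (fst p) (snd p)" by auto
    moreover have "z \<in> blk y" using \<open>y \<in> S1\<close> by (simp add: S1_def)
    ultimately show False using S2prop[OF uw(1-3)] by simp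
  qed
  have c1: "card S1 = k * card H0 - 2"
  proof -
    have sub: "{\<one>\<^bsub>G\<^esub>, e} \<subseteq> {y\<in>carrier G. z \<in> blk y}" using z e by (auto simp: blk_one)
    have "card S1 = card {y\<in>carrier G. z \<in> blk y} - card {\<one>\<^bsub>G\<^esub>, e}"
      unfolding S1_def using sub finite_carrier by (intro card_Diff_subset) auto
    then show ?thesis using thr_card e by simp
  qed
  have inj: "inj_on ?f ((X - {z}) \<times> (?Y - {z}))"
  proof (rule inj_onI)
    fix p p' assume p: "p \<in> (X - {z}) \<times> (?Y - {z})" "p' \<in> (X - {z}) \<times> (?Y - {z})" "?f p = ?f p'"
    obtain u w u' w' where uw: "p = (u,w)" "p' = (u',w')" "u \<in> X - {z}" "w \<in> ?Y - {z}"
      "u' \<in> X - {z}" "w' \<in> ?Y - {z}" using p by auto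
    define h where "h = hh u w"
    have n1: "u \<noteq> w" "u' \<noteq> w'" using neq uw by auto
    have hp: "h \<in> carrier G" "u \<in> blk h" "w \<in> blk h" "u' \<in> blk h" "w' \<in> blk h"
      using hh_prop[OF n1(1)] hh_prop[OF n1(2)] p(3) uw by (auto simp: h_def)
    have "u = u'"
    proof (rule ccontr)
      assume "u \<noteq> u'"
      then have "h = \<one>\<^bsub>G\<^esub>" using meet2[OF hp(1) _ hp(2) hp(4)] uw by auto
      then show False using S2prop[OF uw(3,4)] h_def by simp
    qed
    moreover have "w = w'"
    proof (rule ccontr)
      assume "w \<noteq> w'"
      then have "h = e" using U_uniq[OF hp(1) e(1) _ hp(3) hp(5)] uw by auto
      then show False using S2prop[OF uw(3,4)] h_def by simp
    qed
    ultimately show "p = p'" using uw by simp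
  qed
  have c2: "card S2 = (k - 1) * (k - 1)"
  proof -
    have "card S2 = card ((X - {z}) \<times> (?Y - {z}))" unfolding S2_def using card_image[OF inj] .
    also have "\<dots> = (k - 1) * (k - 1)"
      using X_card card_blk[OF e(1)] z by (simp add: card_cartesian_product card_Diff_singleton)
    finally show ?thesis .
  qed
  have fin: "finite S1" "finite S2" unfolding S1_def S2_def using finite_carrier by auto
  show ?thesis unfolding un using card_Un_disjoint[OF fin disj] c1 c2 by simp
qed

lemma pds:
  "is_regular_pds G D (card H0 * card (UNIV::'a set)) (k * (k * card H0 - 1))
     ((k * card H0 - 2) + (k - 1) * (k - 1)) (k * k)"
  unfolding is_regular_pds_def is_pds_def
proof (intro conjI ballI impI)
  show "card (carrier G) = card H0 * card (UNIV::'a set)" by (rule card_carrier)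
  show "D \<subseteq> carrier G" by (rule D_sub)
  show "card D = k * (k * card H0 - 1)" by (rule card_D)
  show "(\<lambda>x. inv\<^bsub>G\<^esub> x) ` D = D" by (rule inv_D)
  show "\<one>\<^bsub>G\<^esub> \<notin> D" by (rule one_notin_D)
  fix g assume g: "g \<in> carrier G" "g \<noteq> \<one>\<^bsub>G\<^esub>"
  have e1: "inv\<^bsub>G\<^esub> g \<in> carrier G" using g by simp
  have e2: "inv\<^bsub>G\<^esub> g \<noteq> \<one>\<^bsub>G\<^esub>"
  proof
    assume "inv\<^bsub>G\<^esub> g = \<one>\<^bsub>G\<^esub>"
    then have "g = \<one>\<^bsub>G\<^esub>" by (metis g(1) grp.inv_inv grp.inv_one)
    then show False using g by simp
  qed
  note e = e1 e2
  show "card {(x, y). x \<in> D \<and> y \<in> D \<and> x \<otimes>\<^bsub>G\<^esub> inv\<^bsub>G\<^esub> y = g} =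
        (if g \<in> D then (k * card H0 - 2) + (k - 1) * (k - 1) else k * k)"
  proof (cases "g \<in> D")
    case True
    then obtain z where "z \<in> X" "z \<in> blk (inv\<^bsub>G\<^esub> g)" using g_in_D_iff[OF g] by blast
    then show ?thesis using True pairs_eq[OF g] count_meet[OF e] by simp
  next
    case False
    then have "X \<inter> blk (inv\<^bsub>G\<^esub> g) = {}" using g_in_D_iff[OF g] by blast
    then show ?thesis using False pairs_eq[OF g] count_disj[OF e] by simp
  qed
qed

end

lemma subgroup_pow_card:
  fixes H0 :: "'a::{field,finite} set"
  assumes H0_sub: "0 \<notin> H0"
    and H0_mult: "\<And>x y. x \<in> H0 \<Longrightarrow> y \<in> H0 \<Longrightarrow> x * y \<in> H0"
    and H0_inv: "\<And>x. x \<in> H0 \<Longrightarrow> inverse x \<in> H0"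
    and h: "h \<in> H0"
  shows "h ^ card H0 = 1"
proof -
  have hnz: "h \<noteq> 0" using h H0_sub by auto
  have "prod (\<lambda>y. h * y) H0 = prod id H0"
  proof (rule prod.reindex_bij_witness[of _ "\<lambda>y. inverse h * y" "\<lambda>y. h * y"])
    show "inverse h * (h * a) = a" for a using hnz by (simp add: mult.assoc[symmetric])
    show "h * a \<in> H0" if "a \<in> H0" for a using that h H0_mult by simp
    show "h * (inverse h * b) = b" for b using hnz by (simp add: mult.assoc[symmetric])
    show "inverse h * b \<in> H0" if "b \<in> H0" for b using that h H0_mult H0_inv by simp
  qed simp
  moreover have "prod (\<lambda>y. h * y) H0 = h ^ card H0 * prod id H0"
    by (simp add: prod.distrib)
  moreover have "prod id H0 \<noteq> 0" using H0_sub by (simp add: prod_zero_iff)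
  ultimately show ?thesis by simp
qed

theorem mainTheorem19:
  fixes k p d :: nat and H0 :: "'a::{field, finite} set"
  assumes k3: "k \<ge> 3"
    and p_prime: "prime p"
    and d1: "d \<ge> 1"
    and card_field: "card (UNIV :: 'a set) = p ^ d"
    and q_large: "card (UNIV :: 'a set) > (k * (k - 1) div 2) ^ (k * (k - 1))"
    and q_cong: "[card (UNIV :: 'a set) = k * (k - 1) + 1] (mod (2 * k * (k - 1)))"
    and H0_sub: "0 \<notin> H0"
    and H0_one: "1 \<in> H0"
    and H0_mult: "\<And>x y. x \<in> H0 \<Longrightarrow> y \<in> H0 \<Longrightarrow> x * y \<in> H0"
    and H0_inv: "\<And>x. x \<in> H0 \<Longrightarrow> inverse x \<in> H0"
    and H0_card: "card H0 = (card (UNIV :: 'a set) - 1) div (k * (k - 1))"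
  shows "\<exists>D. is_regular_pds (affine_group H0) D
           (card (UNIV :: 'a set) * (card (UNIV :: 'a set) - 1) div (k * (k - 1)))
           (k * (card (UNIV :: 'a set) - k) div (k - 1))
           ((card (UNIV :: 'a set) - 1) div (k - 1) + (k - 1)^2 - 2)
           (k^2)"
proof -
  define q where "q = card (UNIV :: 'a set)"
  define m where "m = k * (k - 1) div 2"
  have ev: "even (k * (k - 1))" by (cases "even k") auto
  have m2: "2 * m = k * (k - 1)" unfolding m_def using ev by simp
  have mpos: "m > 0"
  proof -
    have "k * (k - 1) \<ge> 3 * 2" using k3 by (intro mult_le_mono) auto
    then show ?thesis using m2 by simp
  qed
  have a1: "2 * k * (k - 1) = 4 * m" using m2 by (simp add: mult.assoc)
  have a2: "k * (k - 1) + 1 = 2 * m + 1" using m2 by simp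
  have c4: "[q = 2 * m + 1] (mod (4 * m))"
    using q_cong unfolding q_def a1 a2 .
  define t where "t = q div (4 * m)"
  have "q mod (4 * m) = (2 * m + 1) mod (4 * m)" using c4 by (simp add: cong_def)
  also have "\<dots> = 2 * m + 1" using mpos by simp
  finally have qmod: "q mod (4 * m) = 2 * m + 1" .
  have "4 * m * t + q mod (4 * m) = q" unfolding t_def by (rule mult_div_mod_eq)
  then have qeq: "q = 4 * m * t + 2 * m + 1" using qmod by simp
  define n0 where "n0 = 2 * t + 1"
  have n0odd: "odd n0" unfolding n0_def by simp
  have qm1: "q - 1 = 2 * m * n0" using qeq unfolding n0_def by (simp add: algebra_simps)
  have cardH0: "card H0 = n0"
  proof -
    have "(q - 1) div (k * (k - 1)) = (2 * m * n0) div (2 * m)" by (simp only: qm1 m2)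
    also have "\<dots> = n0" using mpos by simp
    finally show ?thesis using H0_card unfolding q_def by simp
  qed
  obtain g :: 'a where g: "g \<noteq> 0" "\<And>u. u \<noteq> 0 \<Longrightarrow> \<exists>i. u = g ^ i"
    using gen_exists by blast
  have qlarge': "real (card (UNIV::'a set)) > (real m ^ m)^2"
  proof -
    have "(m ^ m)^2 = m ^ (m * 2)" by (simp only: power_mult)
    also have "m * 2 = k * (k - 1)" using m2 by simp
    finally have "(m ^ m)^2 = m ^ (k * (k - 1))" .
    then have "q > (m ^ m)^2" using q_large unfolding q_def m_def by simp
    then have "real q > real ((m ^ m)^2)" by (simp only: of_nat_less_iff)
    then show ?thesis by (simp add: q_def)
  qed
  interpret C: cnt g m n0 k
  proof (unfold_locales)
    show "g \<noteq> 0" by (rule g(1))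
    show "\<exists>i. u = g ^ i" if "u \<noteq> 0" for u using g(2) that by blast
    show "card (UNIV::'a set) - 1 = 2 * m * n0" using qm1 by (simp add: q_def)
    show "odd n0" by (rule n0odd)
    show "m > 0" by (rule mpos)
    show "k \<ge> 3" by (rule k3)
    show "2 * m = k * (k - 1)" by (rule m2)
    show "real (card (UNIV::'a set)) > (real m ^ m)^2" by (rule qlarge')
  qed
  obtain X :: "'a set" where X: "card X = k"
    "\<And>a b a' b'. a \<in> X \<Longrightarrow> b \<in> X \<Longrightarrow> a' \<in> X \<Longrightarrow> b' \<in> X \<Longrightarrow> a \<noteq> b \<Longrightarrow> a' \<noteq> b' \<Longrightarrow>
       [C.ind (a - b) = C.ind (a' - b')] (mod 2*m) \<Longrightarrow> a = a' \<and> b = b'"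
    using C.base_block by blast
  have H0ind: "[C.ind h = 0] (mod 2*m)" if "h \<in> H0" for h
  proof -
    have hnz: "h \<noteq> 0" using that H0_sub by auto
    have "h ^ n0 = 1" using subgroup_pow_card[OF H0_sub H0_mult H0_inv that] cardH0 by simp
    then have "g ^ (C.ind h * n0) = 1" using C.g_ind[OF hnz] by (simp add: power_mult)
    then have "C.N dvd C.ind h * n0" by (simp add: C.g_pow_one_iff)
    then have "2 * m * n0 dvd C.ind h * n0" using C.N_eq' by simp
    moreover have "n0 > 0" using n0odd by (cases n0) auto
    ultimately have "n0 * (2 * m) dvd n0 * C.ind h" "n0 > 0" by (simp_all only: mult.commute)
    then have "2 * m dvd C.ind h" using nat_mult_dvd_cancel1 by blast
    then show ?thesis by (simp add: cong_0_iff)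
  qed
  have P1: "a = a' \<and> b = b'"
    if ab: "a \<in> X" "b \<in> X" "a' \<in> X" "b' \<in> X" "a \<noteq> b" "a' \<noteq> b'" "(a - b) / (a' - b') \<in> H0"
    for a b a' b'
  proof -
    define h where "h = (a - b) / (a' - b')"
    have nz: "a - b \<noteq> 0" "a' - b' \<noteq> 0" using ab by auto
    have e: "a - b = h * (a' - b')" using nz by (simp add: h_def)
    have hnz: "h \<noteq> 0" using nz e by auto
    have "[C.ind (a - b) = C.ind h + C.ind (a' - b')] (mod C.N)"
      unfolding e by (rule C.ind_mult[OF hnz nz(2)])
    then have "[C.ind (a - b) = C.ind h + C.ind (a' - b')] (mod 2*m)" by (rule C.cong_N_2m)
    moreover have "[C.ind h + C.ind (a' - b') = 0 + C.ind (a' - b')] (mod 2*m)"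
      using H0ind[of h] ab(7) unfolding h_def by (intro cong_add) auto
    ultimately have "[C.ind (a - b) = C.ind (a' - b')] (mod 2*m)" by (metis cong_trans add_0)
    then show ?thesis using X(2)[OF ab(1-6)] by blast
  qed
  have P2: "\<exists>a\<in>X. \<exists>b\<in>X. a \<noteq> b \<and> \<delta> / (a - b) \<in> H0" if "\<delta> \<noteq> 0" for \<delta>
  proof -
    define OP where "OP = {p \<in> X \<times> X. fst p \<noteq> snd p}"
    define Cs where "Cs p = (\<lambda>h. (fst p - snd p) * h) ` H0" for p
    have finX: "finite X" by simp
    have cardOP: "card OP = k * (k - 1)"
    proof -
      have "OP = X \<times> X - (\<lambda>x. (x, x)) ` X" unfolding OP_def by auto
      moreover have "card ((\<lambda>x. (x, x)) ` X) = k" using X(1) by (simp add: card_image inj_on_def)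
      moreover have "(\<lambda>x. (x, x)) ` X \<subseteq> X \<times> X" by auto
      ultimately have "card OP = k * k - k" using X(1) by (simp add: card_Diff_subset card_cartesian_product)
      then show ?thesis by (simp add: diff_mult_distrib2)
    qed
    have cardCs: "card (Cs p) = n0" if "p \<in> OP" for p
    proof -
      have "fst p - snd p \<noteq> 0" using that by (auto simp: OP_def)
      then have "inj_on (\<lambda>h. (fst p - snd p) * h) H0" by (auto simp: inj_on_def)
      then show ?thesis unfolding Cs_def using cardH0 by (simp add: card_image)
    qed
    have disj: "Cs p \<inter> Cs p' = {}" if "p \<in> OP" "p' \<in> OP" "p \<noteq> p'" for p p'
    proof (rule ccontr)
      assume "Cs p \<inter> Cs p' \<noteq> {}"
      then obtain h h' where hh: "h \<in> H0" "h' \<in> H0" "(fst p - snd p) * h = (fst p' - snd p') * h'"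
        unfolding Cs_def by auto
      have nz: "fst p' - snd p' \<noteq> 0" "h \<noteq> 0" using that hh H0_sub by (auto simp: OP_def)
      have "(fst p - snd p) / (fst p' - snd p') = h' * inverse h"
        using hh(3) nz by (simp add: field_simps)
      also have "\<dots> \<in> H0" using hh H0_mult H0_inv by auto
      finally have "fst p = fst p' \<and> snd p = snd p'"
        using P1[of "fst p" "snd p" "fst p'" "snd p'"] that by (auto simp: OP_def)
      then show False using that by (simp add: prod_eq_iff)
    qed
    have sub: "(\<Union>p\<in>OP. Cs p) \<subseteq> UNIV - {0}"
      unfolding Cs_def OP_def using H0_sub by auto
    have finOP: "finite OP" unfolding OP_def by simp
    have "card (\<Union>p\<in>OP. Cs p) = (\<Sum>p\<in>OP. card (Cs p))"
      using finOP disj by (intro card_UN_disjoint) (auto simp: Cs_def)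
    also have "\<dots> = k * (k - 1) * n0" using cardOP cardCs by simp
    also have "\<dots> = card (UNIV - {0::'a})"
      using qm1 m2 by (simp add: card_Diff_singleton q_def)
    finally have "(\<Union>p\<in>OP. Cs p) = UNIV - {0}"
      using sub by (intro card_subset_eq) auto
    then have "\<delta> \<in> (\<Union>p\<in>OP. Cs p)" using that by simp
    then obtain p h where ph: "p \<in> OP" "h \<in> H0" "\<delta> = (fst p - snd p) * h" unfolding Cs_def by auto
    then have dh: "\<delta> / (fst p - snd p) = h" by (auto simp: OP_def)
    have "fst p \<in> X" "snd p \<in> X" "fst p \<noteq> snd p" using ph by (auto simp: OP_def)
    then show ?thesis using dh ph(2) by blast
  qed
  interpret A: aff H0 X k
  proof (unfold_locales)
    show "0 \<notin> H0" by (rule H0_sub)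
    show "1 \<in> H0" by (rule H0_one)
    show "x * y \<in> H0" if "x \<in> H0" "y \<in> H0" for x y using H0_mult that .
    show "inverse x \<in> H0" if "x \<in> H0" for x using H0_inv that .
    show "card X = k" by (rule X(1))
    show "k \<ge> 2" using k3 by simp
    show "a = a' \<and> b = b'" if "a \<in> X" "b \<in> X" "a' \<in> X" "b' \<in> X" "a \<noteq> b" "a' \<noteq> b'"
      "(a - b) / (a' - b') \<in> H0" for a b a' b' using P1 that .
    show "\<exists>a\<in>X. \<exists>b\<in>X. a \<noteq> b \<and> \<delta> / (a - b) \<in> H0" if "\<delta> \<noteq> 0" for \<delta> using P2 that .
  qed
  have e1: "q * (q - 1) div (k * (k - 1)) = card H0 * q"
  proof -
    have "q * (q - 1) = q * (2 * m * n0)" by (simp only: qm1)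
    also have "\<dots> = (2 * m) * (n0 * q)" by (simp add: ac_simps)
    also have "\<dots> = k * (k - 1) * (n0 * q)" by (simp only: m2)
    finally have eq: "q * (q - 1) = k * (k - 1) * (n0 * q)" .
    have pos: "k * (k - 1) \<noteq> 0" using k3 by simp
    have "q * (q - 1) div (k * (k - 1)) = k * (k - 1) * (n0 * q) div (k * (k - 1))" by (simp only: eq)
    also have "\<dots> = n0 * q" using pos by (rule nonzero_mult_div_cancel_left)
    finally show ?thesis using cardH0 by simp
  qed
  have qk: "q - 1 = (k - 1) * (k * n0)"
  proof -
    have "q - 1 = (2 * m) * n0" by (simp only: qm1)
    also have "\<dots> = k * (k - 1) * n0" by (simp only: m2)
    also have "\<dots> = (k - 1) * (k * n0)" by (simp add: ac_simps)
    finally show ?thesis .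
  qed
  have kn0: "(q - 1) div (k - 1) = k * n0"
  proof -
    have "q - 1 = (k - 1) * (k * n0)" by (rule qk)
    then show ?thesis using k3 by simp
  qed
  have n0pos: "n0 \<ge> 1" using n0odd by (cases n0) auto
  have kn0ge: "k * n0 \<ge> 3" using k3 n0pos by (metis mult_le_mono nat_mult_1_right)
  have e2: "k * (q - k) div (k - 1) = k * (k * card H0 - 1)"
  proof -
    have "q - k = (k - 1) * (k * n0 - 1)"
    proof -
      have "q - 1 = (k - 1) * (k * n0)" by (rule qk)
      then have "q - 1 - (k - 1) = (k - 1) * (k * n0) - (k - 1) * 1" by simp
      also have "\<dots> = (k - 1) * (k * n0 - 1)" by (simp add: diff_mult_distrib2)
      finally show ?thesis using k3 by simp
    qed
    then have "k * (q - k) = (k - 1) * (k * (k * n0 - 1))" by (simp add: algebra_simps)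
    then show ?thesis using k3 cardH0 by simp
  qed
  have e3: "(q - 1) div (k - 1) + (k - 1)^2 - 2 = (k * card H0 - 2) + (k - 1) * (k - 1)"
    using kn0 kn0ge cardH0 by (simp add: power2_eq_square)
  have e4: "k^2 = k * k" by (simp add: power2_eq_square)
  show ?thesis
    using A.pds unfolding q_def[symmetric] e1 e2 e3 e4 by blast
qed

end
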